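(* Let $t\in\Lambda^\circ$ and let $\alpha:\mathcal T(F)\to\bigoplus_{v\in M_F^0}N$ be the homomorphism $x\mapsto(\log_{\mathcal T,v}(x))_{v\in M_F^0}$. Then there is a polynomial $P$ such that for every $B>0$ the image $\alpha(\{x\in\mathcal T(F)\mid H(t,x)\le B\})$ is a finite set of cardinality at most $P(B)$.
   Context: Let $F$ be a number field, $M_F^0$ and $M_F^\infty$ its sets of finite and infinite places. For $v\in M_F^0$ let $\operatorname{ord}_v$ be the normalized valuation of $F_v$ and $q_v$ the cardinality of its residue field; for $v\in M_F^\infty$ put $q_v:=e^{[F_v:\mathbb R]}$. A simplicial stacky fan $(\Sigma,N,\beta)$ consists of a finitely generated abelian group $N$ of rank $d$, a complete simplicial rational fan $\Sigma$ in $N_{\mathbb Q}$, and a homomorphism $\beta:\mathbb Z^{\Sigma(1)}\to N$ with finite cokernel such that for each ray $\rho\in\Sigma(1)$ the image of $\beta(e_\rho)$ in $N_{\mathbb Q}$ is a nonzero vector on $\rho$. Fix $N=N^{\mathrm{rig}}\oplus N_{\mathrm{tor}}$ with $N^{\mathrm{rig}}=\mathbb Z^d$ and $N_{\mathrm{tor}}\cong G^D:=\bigoplus_{i=1}^{\ell}\mathbb Z/n_i\mathbb Z$; let $b_\rho\in N^{\mathrm{rig}}$ be the $N^{\mathrm{rig}}$-component of $\beta(e_\rho)$. Let $\mathcal T=\mathbb G_m^d\times B(\prod_i\mu_{n_i})$ be the open stacky torus of the associated toric stack; for a field $K\supset F$, $\mathcal T(K)=(K^\times)^d\times\prod_i K^\times/(K^\times)^{n_i}$.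 For $y\in N^{\mathrm{rig}}_{\mathbb R}$ choose a cone $\sigma\ni y$ and write uniquely $y=\sum_{\rho\in\sigma(1)}a_\rho(y)b_\rho$ with $a_\rho(y)\ge0$; set $a_\rho(y)=0$ for $\rho\notin\sigma(1)$. For $n=(y,g)\in N$ put $a_\rho(n):=a_\rho(y)$ and $q(n):=(\sum_\rho\{a_\rho(y)\}b_\rho,\,g)$. Let $\pi_0^*:=q(N)\setminus\{(0,0)\}$ and $I:=\Sigma(1)\sqcup\pi_0^*$. Linear forms on $\mathbb R^I$: $\Xi_\rho(t)=t_\rho$ ($\rho\in\Sigma(1)$), $\Xi_{\mathcal Y}(t)=t_{\mathcal Y}+\sum_{\rho}a_\rho(\mathcal Y)t_\rho$ ($\mathcal Y\in\pi_0^*$); $\Lambda^\circ:=\{t\in\mathbb R^I\mid\Xi_i(t)>0\ \forall i\in I\}$. For $s\in\mathbb R^I$: $\varphi_s(n)=s_{q(n)}+\sum_\rho a_\rho(n)s_\rho$ if $q(n)\ne(0,0)$, $\varphi_s(n)=\sum_\rho a_\rho(n)s_\rho$ otherwise; $\varphi^\infty_s$ is the function on $N^{\mathrm{rig}}_{\mathbb R}$ linear on each cone with $\varphi^\infty_s(b_\rho)=s_\rho$. $\log_{\mathcal T,v}(x)=((\operatorname{ord}_v t_j)_j,(\operatorname{ord}_vu_i\bmod n_i)_i)\in N$ for $v$ finite and $x=((t_j),([u_i]))$; $\log_{\mathcal T,v}(x)=(-\log|t_j|)_j\in\mathbb R^d$ for $v$ infinite. $H_v(s,x)=q_v^{\varphi_s(\log_{\mathcal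 T,v}x)}$ ($v$ finite), $H_v(s,x)=\exp([F_v:\mathbb R]\varphi^\infty_s(\log_{\mathcal T,v}x))$ ($v$ infinite), $H(s,x)=\prod_vH_v(s,x)$. *)

theory Defs
  imports Complex_Main "HOL-Computational_Algebra.Polynomial"
begin

definition number_field :: "complex set \<Rightarrow> bool" where
  "number_field F \<longleftrightarrow> 0 \<in> F \<and> 1 \<in> F \<and>
     (\<forall>x\<in>F. \<forall>y\<in>F. x + y \<in> F \<and> x * y \<in> F) \<and>
     (\<forall>x\<in>F. - x \<in> F \<and> inverse x \<in> F) \<and>
     (\<exists>B. finite B \<and> B \<subseteq> F \<and>
        (\<forall>x\<in>F. \<exists>c. (\<forall>b\<in>B. c b \<in> \<rat>) \<and> x = (\<Sum>b\<in>B. c b * b)))"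

definition algebraic_integer :: "complex \<Rightarrow> bool" where
  "algebraic_integer x \<longleftrightarrow> (\<exists>p :: int poly. lead_coeff p = 1 \<and> poly (map_poly of_int p) x = 0)"

definition ring_of_integers :: "complex set \<Rightarrow> complex set" where
  "ring_of_integers F = {x \<in> F. algebraic_integer x}"

definition is_ideal :: "complex set \<Rightarrow> complex set \<Rightarrow> bool" where
  "is_ideal R P \<longleftrightarrow> P \<subseteq> R \<and> 0 \<in> P \<and> (\<forall>a\<in>P. \<forall>b\<in>P. a + b \<in> P) \<and> (\<forall>a\<in>P. - a \<in> P)
     \<and> (\<forall>r\<in>R. \<forall>a\<in>P. r * a \<in> P)"

definition is_prime_ideal :: "complex set \<Rightarrow> complex set \<Rightarrow> bool" where
  "is_prime_ideal R P \<longleftrightarrow> is_ideal R P \<and> P \<noteq> R \<and>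
     (\<forall>a\<in>R. \<forall>b\<in>R. a * b \<in> P \<longrightarrow> a \<in> P \<or> b \<in> P)"

definition finite_places :: "complex set \<Rightarrow> complex set set" where
  "finite_places F = {P. is_prime_ideal (ring_of_integers F) P \<and> P \<noteq> {0}}"

fun ideal_pow :: "complex set \<Rightarrow> complex set \<Rightarrow> nat \<Rightarrow> complex set" where
  "ideal_pow R P 0 = R"
| "ideal_pow R P (Suc k) =
     {sum_list (map (\<lambda>(a, b). a * b) l) | l. set l \<subseteq> P \<times> ideal_pow R P k}"

definition ord_int :: "complex set \<Rightarrow> complex set \<Rightarrow> complex \<Rightarrow> nat" where
  "ord_int F P a = (GREATEST k. a \<in> ideal_pow (ring_of_integers F) P k)"

definition ord_v :: "complex set \<Rightarrow> complex set \<Rightarrow> complex \<Rightarrow> int" where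
  "ord_v F P x = (SOME k. \<exists>a\<in>ring_of_integers F - {0}. \<exists>b\<in>ring_of_integers F - {0}.
       x = a / b \<and> k = int (ord_int F P a) - int (ord_int F P b))"

definition q_fin :: "complex set \<Rightarrow> complex set \<Rightarrow> nat" where
  "q_fin F P = card ((\<lambda>a. (\<lambda>p. a + p) ` P) ` ring_of_integers F)"

text \<open>Field embeddings F \<rightarrow> \<complex> (normalized to 0 outside F); infinite places are
  classes {\<sigma>, conj \<circ> \<sigma>}; [F_v : \<real>] is the cardinality of that class.\<close>
definition field_embedding :: "complex set \<Rightarrow> (complex \<Rightarrow> complex) \<Rightarrow> bool" where
  "field_embedding F \<sigma> \<longleftrightarrow> \<sigma> 1 = 1 \<and>
     (\<forall>x\<in>F. \<forall>y\<in>F. \<sigma> (x + y) = \<sigma> x + \<sigma> y \<and> \<sigma> (x * y) = \<sigma> x * \<sigma> y) \<and>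
     (\<forall>x. x \<notin> F \<longrightarrow> \<sigma> x = 0)"

definition infinite_places :: "complex set \<Rightarrow> (complex \<Rightarrow> complex) set set" where
  "infinite_places F = {{\<sigma>, cnj \<circ> \<sigma>} | \<sigma>. field_embedding F \<sigma>}"

definition local_degree :: "(complex \<Rightarrow> complex) set \<Rightarrow> nat" where
  "local_degree v = card v"

definition abs_inf :: "(complex \<Rightarrow> complex) set \<Rightarrow> complex \<Rightarrow> real" where
  "abs_inf v x = cmod ((SOME \<sigma>. \<sigma> \<in> v) x)"

text \<open>N = \<int>^d \<oplus> \<Oplus>_{i<l} \<int>/n_i; rigid part as nat \<Rightarrow> int supported on {..<d},
  torsion part as nat \<Rightarrow> int with 0 \<le> g i < n i for i < l and 0 otherwise.
  Rays form a finite set; b \<rho> is the rigid component of \<beta>(e_\<rho>); a cone of the simplicial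
  fan \<Fan> is given by its set of rays.\<close>

definition cone_span :: "nat \<Rightarrow> ('r \<Rightarrow> nat \<Rightarrow> int) \<Rightarrow> 'r set \<Rightarrow> (nat \<Rightarrow> real) set" where
  "cone_span d b \<sigma> = {y. \<exists>a. (\<forall>\<rho>\<in>\<sigma>. a \<rho> \<ge> 0) \<and> (\<forall>j<d. y j = (\<Sum>\<rho>\<in>\<sigma>. a \<rho> * real_of_int (b \<rho> j)))}"

definition simplicial_stacky_fan ::
  "nat \<Rightarrow> nat \<Rightarrow> (nat \<Rightarrow> nat) \<Rightarrow> 'r set \<Rightarrow> ('r \<Rightarrow> nat \<Rightarrow> int) \<Rightarrow> 'r set set \<Rightarrow> bool" where
  "simplicial_stacky_fan d l n Rays b Fan \<longleftrightarrow>
     (\<forall>i<l. n i > 0) \<and> finite Rays \<and> finite Fan \<and>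
     (\<forall>\<rho>\<in>Rays. (\<forall>j\<ge>d. b \<rho> j = 0) \<and> (\<exists>j<d. b \<rho> j \<noteq> 0)) \<and>
     (\<forall>\<sigma>\<in>Fan. \<sigma> \<subseteq> Rays) \<and>
     (\<forall>\<rho>\<in>Rays. {\<rho>} \<in> Fan) \<and>
     (\<forall>\<sigma>\<in>Fan. \<forall>\<tau>. \<tau> \<subseteq> \<sigma> \<longrightarrow> \<tau> \<in> Fan) \<and>
     (\<forall>\<sigma>\<in>Fan. \<forall>c. (\<forall>j<d. (\<Sum>\<rho>\<in>\<sigma>. c \<rho> * real_of_int (b \<rho> j)) = 0) \<longrightarrow> (\<forall>\<rho>\<in>\<sigma>. c \<rho> = 0)) \<and>
     (\<forall>\<sigma>\<in>Fan. \<forall>\<tau>\<in>Fan. cone_span d b \<sigma> \<inter> cone_span d b \<tau> = cone_span d b (\<sigma> \<inter> \<tau>)) \<and>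
     (\<forall>y. \<exists>\<sigma>\<in>Fan. y \<in> cone_span d b \<sigma>)"

definition coord :: "nat \<Rightarrow> ('r \<Rightarrow> nat \<Rightarrow> int) \<Rightarrow> 'r set set \<Rightarrow> 'r \<Rightarrow> (nat \<Rightarrow> real) \<Rightarrow> real" where
  "coord d b Fan \<rho> y = (SOME a. \<exists>\<sigma>\<in>Fan. (\<forall>\<rho>'. \<rho>' \<notin> \<sigma> \<longrightarrow> a \<rho>' = 0) \<and> (\<forall>\<rho>'\<in>\<sigma>. a \<rho>' \<ge> 0) \<and>
       (\<forall>j<d. y j = (\<Sum>\<rho>'\<in>\<sigma>. a \<rho>' * real_of_int (b \<rho>' j)))) \<rho>"

type_synonym Nelt = "(nat \<Rightarrow> int) \<times> (nat \<Rightarrow> int)"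
type_synonym Yelt = "(nat \<Rightarrow> real) \<times> (nat \<Rightarrow> int)"

definition Nset :: "nat \<Rightarrow> nat \<Rightarrow> (nat \<Rightarrow> nat) \<Rightarrow> Nelt set" where
  "Nset d l n = {(y, g). (\<forall>j\<ge>d. y j = 0) \<and> (\<forall>i<l. 0 \<le> g i \<and> g i < int (n i)) \<and> (\<forall>i\<ge>l. g i = 0)}"

definition rig_real :: "(nat \<Rightarrow> int) \<Rightarrow> nat \<Rightarrow> real" where
  "rig_real y = (\<lambda>j. real_of_int (y j))"

definition qmap :: "nat \<Rightarrow> 'r set \<Rightarrow> ('r \<Rightarrow> nat \<Rightarrow> int) \<Rightarrow> 'r set set \<Rightarrow> Nelt \<Rightarrow> Yelt" where
  "qmap d Rays b Fan m =
     ((\<lambda>j. \<Sum>\<rho>\<in>Rays. frac (coord d b Fan \<rho> (rig_real (fst m))) * real_of_int (b \<rho> j)), snd m)"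

definition pi0_star :: "nat \<Rightarrow> nat \<Rightarrow> (nat \<Rightarrow> nat) \<Rightarrow> 'r set \<Rightarrow> ('r \<Rightarrow> nat \<Rightarrow> int) \<Rightarrow> 'r set set \<Rightarrow> Yelt set" where
  "pi0_star d l n Rays b Fan = qmap d Rays b Fan ` Nset d l n - {((\<lambda>j. 0), (\<lambda>i. 0))}"

text \<open>I = \<Fan>(1) \<squnion> \<pi>_0^*, realised as the sum type; t, s :: I-indexed real vectors.\<close>
definition Lambda_open :: "nat \<Rightarrow> nat \<Rightarrow> (nat \<Rightarrow> nat) \<Rightarrow> 'r set \<Rightarrow> ('r \<Rightarrow> nat \<Rightarrow> int) \<Rightarrow> 'r set set
     \<Rightarrow> ('r + Yelt \<Rightarrow> real) set" where
  "Lambda_open d l n Rays b Fan = {t.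
     (\<forall>\<rho>\<in>Rays. t (Inl \<rho>) > 0) \<and>
     (\<forall>Y\<in>pi0_star d l n Rays b Fan.
        t (Inr Y) + (\<Sum>\<rho>\<in>Rays. coord d b Fan \<rho> (fst Y) * t (Inl \<rho>)) > 0)}"

definition phi :: "nat \<Rightarrow> 'r set \<Rightarrow> ('r \<Rightarrow> nat \<Rightarrow> int) \<Rightarrow> 'r set set \<Rightarrow> ('r + Yelt \<Rightarrow> real) \<Rightarrow> Nelt \<Rightarrow> real" where
  "phi d Rays b Fan s m =
     (if qmap d Rays b Fan m \<noteq> ((\<lambda>j. 0), (\<lambda>i. 0))
      then s (Inr (qmap d Rays b Fan m)) + (\<Sum>\<rho>\<in>Rays. coord d b Fan \<rho> (rig_real (fst m)) * s (Inl \<rho>))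
      else (\<Sum>\<rho>\<in>Rays. coord d b Fan \<rho> (rig_real (fst m)) * s (Inl \<rho>)))"

text \<open>\<phi>^\<infinity>_s: linear on each cone with value s_\<rho> at b_\<rho>.\<close>
definition phi_inf :: "nat \<Rightarrow> 'r set \<Rightarrow> ('r \<Rightarrow> nat \<Rightarrow> int) \<Rightarrow> 'r set set \<Rightarrow> ('r + Yelt \<Rightarrow> real) \<Rightarrow> (nat \<Rightarrow> real) \<Rightarrow> real" where
  "phi_inf d Rays b Fan s y = (\<Sum>\<rho>\<in>Rays. coord d b Fan \<rho> y * s (Inl \<rho>))"

text \<open>\<T>(F) = (F^\<times>)^d \<times> \<Prod>_{i<l} F^\<times>/(F^\<times>)^{n_i}; classes are represented as cosets.\<close>
type_synonym Telt = "(nat \<Rightarrow> complex) \<times> (nat \<Rightarrow> complex set)"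

definition torus_points :: "complex set \<Rightarrow> nat \<Rightarrow> nat \<Rightarrow> (nat \<Rightarrow> nat) \<Rightarrow> Telt set" where
  "torus_points F d l n = {(t, U).
     (\<forall>j<d. t j \<in> F - {0}) \<and> (\<forall>j\<ge>d. t j = 1) \<and>
     (\<forall>i<l. \<exists>u\<in>F - {0}. U i = {u * w ^ n i | w. w \<in> F - {0}}) \<and> (\<forall>i\<ge>l. U i = {})}"

definition log_fin :: "complex set \<Rightarrow> nat \<Rightarrow> nat \<Rightarrow> (nat \<Rightarrow> nat) \<Rightarrow> complex set \<Rightarrow> Telt \<Rightarrow> Nelt" where
  "log_fin F d l n v x =
     ((\<lambda>j. if j < d then ord_v F v (fst x j) else 0),
      (\<lambda>i. if i < l then ord_v F v (SOME u. u \<in> snd x i) mod int (n i) else 0))"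

definition log_inf :: "nat \<Rightarrow> (complex \<Rightarrow> complex) set \<Rightarrow> Telt \<Rightarrow> nat \<Rightarrow> real" where
  "log_inf d v x = (\<lambda>j. if j < d then - ln (abs_inf v (fst x j)) else 0)"

definition height ::
  "complex set \<Rightarrow> nat \<Rightarrow> nat \<Rightarrow> (nat \<Rightarrow> nat) \<Rightarrow> 'r set \<Rightarrow> ('r \<Rightarrow> nat \<Rightarrow> int) \<Rightarrow> 'r set set
     \<Rightarrow> ('r + Yelt \<Rightarrow> real) \<Rightarrow> Telt \<Rightarrow> real" where
  "height F d l n Rays b Fan s x =
     (\<Prod>v\<in>{v\<in>finite_places F. log_fin F d l n v x \<noteq> ((\<lambda>j. 0), (\<lambda>i. 0))}.
         real (q_fin F v) powr phi d Rays b Fan s (log_fin F d l n v x)) *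
     (\<Prod>v\<in>infinite_places F.
         exp (real (local_degree v) * phi_inf d Rays b Fan s (log_inf d v x)))"

definition alpha :: "complex set \<Rightarrow> nat \<Rightarrow> nat \<Rightarrow> (nat \<Rightarrow> nat) \<Rightarrow> Telt \<Rightarrow> complex set \<Rightarrow> Nelt" where
  "alpha F d l n x = (\<lambda>v. if v \<in> finite_places F then log_fin F d l n v x else ((\<lambda>j. 0), (\<lambda>i. 0)))"

end

theory Submission
  imports Defs "Jordan_Normal_Form.Char_Poly" "HOL-Computational_Algebra.Primes"
begin

lemma ai_iff: "algebraic_integer x \<longleftrightarrow> algebraic_int x"
  unfolding algebraic_integer_def algebraic_int_altdef_ipoly by auto

lemma ai_eigen:
  fixes z :: complex and v :: "nat \<Rightarrow> complex" and A :: "nat \<Rightarrow> nat \<Rightarrow> int"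
  assumes "s0 < n" "v s0 \<noteq> 0"
    and rel: "\<And>s. s < n \<Longrightarrow> z * v s = (\<Sum>t<n. of_int (A s t) * v t)"
  shows "algebraic_int z"
proof -
  define M where "M = mat n n (\<lambda>(s,t). A s t)"
  define Mc where "Mc = map_mat (of_int :: int \<Rightarrow> complex) M"
  define w where "w = vec n v"
  have M: "M \<in> carrier_mat n n" unfolding M_def by auto
  have Mc: "Mc \<in> carrier_mat n n" unfolding Mc_def using M by auto
  have "Mc *\<^sub>v w = z \<cdot>\<^sub>v w"
  proof (rule eq_vecI)
    fix i assume i: "i < dim_vec (z \<cdot>\<^sub>v w)"
    hence i': "i < n" by (simp add: w_def)
    have "(Mc *\<^sub>v w) $ i = (\<Sum>t<n. of_int (A i t) * v t)"
      using i' unfolding Mc_def M_def w_def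
      by (simp add: mult_mat_vec_def scalar_prod_def lessThan_atLeast0)
    also have "\<dots> = z * v i" using rel[OF i'] by simp
    finally show "(Mc *\<^sub>v w) $ i = (z \<cdot>\<^sub>v w) $ i" using i' by (simp add: w_def)
  qed (simp add: w_def Mc_def M_def)
  moreover have "w \<noteq> 0\<^sub>v n" using assms(1,2) unfolding w_def
    by (metis index_vec index_zero_vec(1))
  moreover have "w \<in> carrier_vec n" unfolding w_def by simp
  ultimately have "eigenvector Mc w z" unfolding eigenvector_def using Mc by auto
  hence "eigenvalue Mc z" unfolding eigenvalue_def by auto
  hence "poly (char_poly Mc) z = 0" using eigenvalue_root_char_poly[OF Mc] by simp
  moreover have "char_poly Mc = map_poly of_int (char_poly M)"
    unfolding Mc_def by (rule of_int_hom.char_poly_hom[OF M])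
  moreover have "lead_coeff (char_poly M) = 1" using degree_monic_char_poly[OF M] by simp
  ultimately show ?thesis unfolding algebraic_int_altdef_ipoly by auto
qed

lemma sum_divmod:
  assumes "l > 0"
  shows "(\<Sum>t<k*l. f (t div l) (t mod l)) = (\<Sum>i<(k::nat). \<Sum>j<l. (f i j :: 'a::comm_monoid_add))"
proof (induction k)
  case 0 then show ?case by simp
next
  case (Suc k)
  have "(\<Sum>t<Suc k*l. f (t div l) (t mod l)) = (\<Sum>t<k*l + l. f (t div l) (t mod l))"
    by (simp add: add.commute)
  also have "\<dots> = (\<Sum>t<k*l. f (t div l) (t mod l)) + (\<Sum>t=k*l..<k*l+l. f (t div l) (t mod l))"
    using sum.atLeastLessThan_concat[of 0 "k*l" "k*l+l" "\<lambda>t. f (t div l) (t mod l)"]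
    by (simp add: atLeast0LessThan)
  also have "(\<Sum>t=k*l..<k*l+l. f (t div l) (t mod l)) = (\<Sum>j<l. f ((k*l+j) div l) ((k*l+j) mod l))"
    using sum.shift_bounds_nat_ivl[of "\<lambda>t. f (t div l) (t mod l)" 0 "k*l" l]
    by (simp add: atLeast0LessThan add.commute)
  also have "\<dots> = (\<Sum>j<l. f k j)"
    using assms by (intro sum.cong) auto
  finally show ?case using Suc by simp
qed

definition rx :: "int poly \<Rightarrow> nat \<Rightarrow> nat \<Rightarrow> int" where
  "rx p m i = (if m < degree p then (if i = m then 1 else 0) else - coeff p i)"

lemma pow_red:
  fixes x :: complex
  assumes "lead_coeff p = 1" "poly (map_poly of_int p) x = 0" "m \<le> degree p"
  shows "x ^ m = (\<Sum>i<degree p. of_int (rx p m i) * x ^ i)"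
proof (cases "m < degree p")
  case True
  have "(\<Sum>i<degree p. of_int (rx p m i) * x ^ i) = (\<Sum>i<degree p. if i = m then x^i else 0)"
    by (intro sum.cong) (auto simp: rx_def True)
  then show ?thesis using True by simp
next
  case False
  hence m: "m = degree p" using assms by simp
  have "0 = (\<Sum>i\<le>degree p. of_int (coeff p i) * x ^ i)"
    using assms(2) by (simp add: poly_altdef degree_map_poly coeff_map_poly)
  also have "\<dots> = (\<Sum>i<degree p. of_int (coeff p i) * x ^ i) + x ^ degree p"
    using assms(1) by (simp add: lessThan_Suc_atMost[symmetric])
  finally have "x ^ degree p = - (\<Sum>i<degree p. of_int (coeff p i) * x ^ i)"
    by (simp add: eq_neg_iff_add_eq_0 add.commute)
  then show ?thesis unfolding rx_def m by (simp add: sum_negf)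
qed

lemma monic_root_deg:
  fixes x :: complex
  assumes "lead_coeff p = 1" "poly (map_poly of_int p) x = 0"
  shows "degree p > 0"
proof (rule ccontr)
  assume "\<not> degree p > 0"
  hence "p = [:1:]" using assms(1) by (metis degree_0_id lead_coeff_pCons(1) neq0_conv pCons_0_0 zero_neq_one)
  thus False using assms(2) by simp
qed

lemma ai_closed:
  fixes x y :: complex
  assumes "algebraic_int x" "algebraic_int y"
  shows "algebraic_int (x * y)" "algebraic_int (x + y)"
proof -
  obtain p where p: "poly (map_poly of_int p) x = 0" "lead_coeff p = 1"
    using assms(1) unfolding algebraic_int_altdef_ipoly by auto
  obtain q where q: "poly (map_poly of_int q) y = 0" "lead_coeff q = 1"
    using assms(2) unfolding algebraic_int_altdef_ipoly by auto
  define k where "k = degree p"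
  define l where "l = degree q"
  have k: "k > 0" unfolding k_def using monic_root_deg p by blast
  have l: "l > 0" unfolding l_def using monic_root_deg q by blast
  define v where "v s = x ^ (s div l) * y ^ (s mod l)" for s
  have v0: "v 0 = 1" by (simp add: v_def)
  have n0: "0 < k * l" using k l by simp
  have xr: "x ^ m = (\<Sum>i<k. of_int (rx p m i) * x ^ i)" if "m \<le> k" for m
    using pow_red[OF p(2) p(1)] that unfolding k_def by simp
  have yr: "y ^ m = (\<Sum>j<l. of_int (rx q m j) * y ^ j)" if "m \<le> l" for m
    using pow_red[OF q(2) q(1)] that unfolding l_def by simp
  have vsum: "(\<Sum>t<k*l. g (t div l) (t mod l) * v t) = (\<Sum>i<k. \<Sum>j<l. g i j * (x^i * y^j))" for g
    unfolding v_def using sum_divmod[OF l, of "\<lambda>i j. g i j * (x^i * y^j)" k] by simp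
  show "algebraic_int (x * y)"
  proof (rule ai_eigen[OF n0, of v, OF _ ])
    show "v 0 \<noteq> 0" using v0 by simp
    fix s assume s: "s < k * l"
    define i j where "i = s div l" and "j = s mod l"
    have i: "i < k" using s l unfolding i_def by (simp add: less_mult_imp_div_less)
    have j: "j < l" using l unfolding j_def by simp
    have "x * y * v s = x ^ (i+1) * y ^ (j+1)" unfolding v_def i_def j_def by (simp add: algebra_simps)
    also have "\<dots> = (\<Sum>i'<k. of_int (rx p (i+1) i') * x ^ i') * (\<Sum>j'<l. of_int (rx q (j+1) j') * y ^ j')"
      using xr[of "i+1"] yr[of "j+1"] i j by simp
    also have "\<dots> = (\<Sum>i'<k. \<Sum>j'<l. of_int (rx p (i+1) i' * rx q (j+1) j') * (x^i' * y^j'))"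
      by (simp add: sum_product algebra_simps)
    also have "\<dots> = (\<Sum>t<k*l. of_int (rx p (i+1) (t div l) * rx q (j+1) (t mod l)) * v t)"
      using vsum[of "\<lambda>i' j'. of_int (rx p (i+1) i' * rx q (j+1) j')"] by simp
    finally show "x * y * v s = (\<Sum>t<k*l. of_int (rx p (s div l + 1) (t div l) * rx q (s mod l + 1) (t mod l)) * v t)"
      unfolding i_def j_def .
  qed
  show "algebraic_int (x + y)"
  proof (rule ai_eigen[OF n0, of v, OF _ ])
    show "v 0 \<noteq> 0" using v0 by simp
    fix s assume s: "s < k * l"
    define i j where "i = s div l" and "j = s mod l"
    have i: "i < k" using s l unfolding i_def by (simp add: less_mult_imp_div_less)
    have j: "j < l" using l unfolding j_def by simp
    define A where "A i' j' = (if j' = j then rx p (i+1) i' else 0) + (if i' = i then rx q (j+1) j' else 0)" for i' j'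
    have "(x + y) * v s = x ^ (i+1) * y ^ j + x ^ i * y ^ (j+1)" unfolding v_def i_def j_def by (simp add: algebra_simps)
    also have "\<dots> = (\<Sum>i'<k. of_int (rx p (i+1) i') * x ^ i') * y ^ j + x ^ i * (\<Sum>j'<l. of_int (rx q (j+1) j') * y ^ j')"
      using xr[of "i+1"] yr[of "j+1"] i j by simp
    also have "\<dots> = (\<Sum>i'<k. \<Sum>j'<l. (if j' = j then of_int (rx p (i+1) i') * (x^i' * y^j') else 0))
        + (\<Sum>i'<k. \<Sum>j'<l. (if i' = i then of_int (rx q (j+1) j') * (x^i' * y^j') else 0))"
    proof -
      have e1: "(\<Sum>i'<k. \<Sum>j'<l. (if j' = j then of_int (rx p (i+1) i') * (x^i' * y^j') else 0))
          = (\<Sum>i'<k. of_int (rx p (i+1) i') * x ^ i') * y ^ j"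
        using j by (simp add: sum_distrib_right sum_distrib_left mult_ac)
      have e2: "(\<Sum>i'<k. \<Sum>j'<l. (if i' = i then of_int (rx q (j+1) j') * (x^i' * y^j') else 0))
          = x ^ i * (\<Sum>j'<l. of_int (rx q (j+1) j') * y ^ j')"
      proof -
        have "(\<Sum>i'<k. \<Sum>j'<l. (if i' = i then of_int (rx q (j+1) j') * (x^i' * y^j') else 0))
           = (\<Sum>i'<k. if i' = i then (\<Sum>j'<l. of_int (rx q (j+1) j') * (x^i' * y^j')) else 0)"
          by (intro sum.cong) auto
        also have "\<dots> = (\<Sum>j'<l. of_int (rx q (j+1) j') * (x^i * y^j'))" using i by simp
        finally show ?thesis by (simp add: sum_distrib_left mult_ac)
      qed
      show ?thesis using e1 e2 by simp
    qed
    also have "\<dots> = (\<Sum>i'<k. \<Sum>j'<l. of_int (A i' j') * (x^i' * y^j'))"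
    proof -
      have "(\<Sum>i'<k. \<Sum>j'<l. of_int (A i' j') * (x^i' * y^j')) = (\<Sum>i'<k. \<Sum>j'<l.
         (if j' = j then of_int (rx p (i+1) i') * (x^i' * y^j') else 0) + (if i' = i then of_int (rx q (j+1) j') * (x^i' * y^j') else 0))"
        by (intro sum.cong refl) (auto simp: A_def algebra_simps)
      thus ?thesis by (simp add: sum.distrib)
    qed
    also have "\<dots> = (\<Sum>t<k*l. of_int (A (t div l) (t mod l)) * v t)"
      using vsum[of "\<lambda>i' j'. of_int (A i' j')"] by simp
    finally show "(x + y) * v s = (\<Sum>t<k*l. of_int ((if t mod l = s mod l then rx p (s div l + 1) (t div l) else 0) + (if t div l = s div l then rx q (s mod l + 1) (t mod l) else 0)) * v t)"
      unfolding A_def i_def j_def .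
  qed
qed

definition qscale :: "rat \<Rightarrow> complex \<Rightarrow> complex" where "qscale q z = of_rat q * z"

interpretation QV: vector_space qscale
  by unfold_locales (auto simp: qscale_def algebra_simps of_rat_add of_rat_mult)

locale nf =
  fixes F :: "complex set"
  assumes nf: "number_field F"
begin

abbreviation "R \<equiv> ring_of_integers F"

lemma F0: "0 \<in> F" and F1: "1 \<in> F"
  and Fadd: "x \<in> F \<Longrightarrow> y \<in> F \<Longrightarrow> x + y \<in> F"
  and Fmult: "x \<in> F \<Longrightarrow> y \<in> F \<Longrightarrow> x * y \<in> F"
  and Fneg: "x \<in> F \<Longrightarrow> - x \<in> F"
  and Finv: "x \<in> F \<Longrightarrow> inverse x \<in> F"
  using nf unfolding number_field_def by auto

lemma Fdiff: "x \<in> F \<Longrightarrow> y \<in> F \<Longrightarrow> x - y \<in> F"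
proof -
  assume "x \<in> F" "y \<in> F"
  hence "x + - y \<in> F" by (intro Fadd Fneg)
  thus ?thesis by simp
qed

lemma Fdiv: "x \<in> F \<Longrightarrow> y \<in> F \<Longrightarrow> x / y \<in> F"
proof -
  assume "x \<in> F" "y \<in> F"
  hence "x * inverse y \<in> F" by (intro Fmult Finv)
  thus ?thesis by (simp add: divide_inverse)
qed

lemma Fnat: "of_nat n \<in> F"
proof (induction n)
  case 0 show ?case using F0 by simp
next
  case (Suc n)
  have "1 + of_nat n \<in> F" using Suc F1 by (intro Fadd)
  thus ?case by simp
qed

lemma Fint: "of_int k \<in> F"
proof (cases "k \<ge> 0")
  case True
  then obtain n where "k = int n" using nonneg_eq_int by blast
  thus ?thesis using Fnat[of n] by simp
next
  case False
  define n where "n = nat (- k)"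
  have "k = - int n" using False unfolding n_def by simp
  thus ?thesis using Fneg[OF Fnat[of n]] by simp
qed

lemma Fpow: "x \<in> F \<Longrightarrow> x ^ n \<in> F"
proof (induction n)
  case 0 show ?case using F1 by simp
next
  case (Suc n) thus ?case using Fmult by simp
qed

lemma Fsum: "(\<And>i. i \<in> A \<Longrightarrow> f i \<in> F) \<Longrightarrow> sum f A \<in> F"
  by (induction A rule: infinite_finite_induct) (auto intro: F0 Fadd)

lemma Fprod: "(\<And>i. i \<in> A \<Longrightarrow> f i \<in> F) \<Longrightarrow> prod f A \<in> F"
  by (induction A rule: infinite_finite_induct) (auto intro: F1 Fmult)

lemma R_iff: "x \<in> R \<longleftrightarrow> x \<in> F \<and> algebraic_int x"
  unfolding ring_of_integers_def ai_iff by auto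

lemma RF: "x \<in> R \<Longrightarrow> x \<in> F" using R_iff by auto

lemma R0: "0 \<in> R" unfolding R_iff using F0 by simp
lemma R1: "1 \<in> R" unfolding R_iff using F1 by simp

lemma Radd: "x \<in> R \<Longrightarrow> y \<in> R \<Longrightarrow> x + y \<in> R"
  unfolding R_iff using Fadd ai_closed(2) by blast
lemma Rmult: "x \<in> R \<Longrightarrow> y \<in> R \<Longrightarrow> x * y \<in> R"
  unfolding R_iff using Fmult ai_closed(1) by blast
lemma Rneg: "x \<in> R \<Longrightarrow> - x \<in> R"
  unfolding R_iff using Fneg algebraic_int_minus by blast

lemma Rdiff: "x \<in> R \<Longrightarrow> y \<in> R \<Longrightarrow> x - y \<in> R"
proof -
  assume "x \<in> R" "y \<in> R"
  hence "x + - y \<in> R" by (intro Radd Rneg)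
  thus ?thesis by simp
qed

lemma Rint: "of_int k \<in> R"
  unfolding R_iff using Fint by simp
lemma Rnat: "of_nat n \<in> R"
  unfolding R_iff using Fnat by simp

lemma Rpow: "x \<in> R \<Longrightarrow> x ^ n \<in> R"
proof (induction n)
  case 0 show ?case using R1 by simp
next
  case (Suc n) thus ?case using Rmult by simp
qed

lemma Rsum: "(\<And>i. i \<in> A \<Longrightarrow> f i \<in> R) \<Longrightarrow> sum f A \<in> R"
  by (induction A rule: infinite_finite_induct) (auto intro: R0 Radd)

lemma Rprod: "(\<And>i. i \<in> A \<Longrightarrow> f i \<in> R) \<Longrightarrow> prod f A \<in> R"
  by (induction A rule: infinite_finite_induct) (auto intro: R1 Rmult)

definition "Bs = (SOME B. finite B \<and> B \<subseteq> F \<and>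
        (\<forall>x\<in>F. \<exists>c. (\<forall>b\<in>B. c b \<in> \<rat>) \<and> x = (\<Sum>b\<in>B. c b * b)))"

lemma Bs: "finite Bs" "Bs \<subseteq> F" "\<And>x. x \<in> F \<Longrightarrow> \<exists>c. (\<forall>b\<in>Bs. c b \<in> \<rat>) \<and> x = (\<Sum>b\<in>Bs. c b * b)"
proof -
  have "\<exists>B. finite B \<and> B \<subseteq> F \<and> (\<forall>x\<in>F. \<exists>c. (\<forall>b\<in>B. c b \<in> \<rat>) \<and> x = (\<Sum>b\<in>B. c b * b))"
    using nf unfolding number_field_def by blast
  from someI_ex[OF this] show "finite Bs" "Bs \<subseteq> F" "\<And>x. x \<in> F \<Longrightarrow> \<exists>c. (\<forall>b\<in>Bs. c b \<in> \<rat>) \<and> x = (\<Sum>b\<in>Bs. c b * b)"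
    unfolding Bs_def by blast+
qed

abbreviation "D \<equiv> card Bs"

lemma F_span: "F \<subseteq> QV.span Bs"
proof
  fix x assume "x \<in> F"
  then obtain c where c: "\<forall>b\<in>Bs. c b \<in> \<rat>" "x = (\<Sum>b\<in>Bs. c b * b)" using Bs(3) by blast
  have "\<forall>b\<in>Bs. \<exists>r. c b = of_rat r" using c(1) by (auto elim: Rats_cases)
  then obtain r where r: "\<forall>b\<in>Bs. c b = of_rat (r b)" by metis
  have "x = (\<Sum>b\<in>Bs. qscale (r b) b)" using c(2) r by (simp add: qscale_def)
  also have "\<dots> \<in> QV.span Bs" by (intro QV.span_sum QV.span_scale QV.span_base)
  finally show "x \<in> QV.span Bs" .
qed

lemma dep_nonzero:
  assumes "\<And>i. i \<le> D \<Longrightarrow> y i \<in> F"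
  shows "\<exists>c :: nat \<Rightarrow> int. (\<Sum>i\<le>D. of_int (c i) * y i) = 0 \<and> (\<exists>i\<le>D. c i \<noteq> 0)"
proof (cases "inj_on y {..D}")
  case False
  then obtain i j where ij: "i \<le> D" "j \<le> D" "i \<noteq> j" "y i = y j" unfolding inj_on_def by auto
  define c where "c k = (if k = i then 1 else if k = j then -1 else 0 :: int)" for k
  have "(\<Sum>k\<le>D. of_int (c k) * y k) = (\<Sum>k\<le>D. (if k = i then y k else 0) - (if k = j then y k else 0))"
    by (intro sum.cong) (auto simp: c_def ij(3))
  also have "\<dots> = 0" using ij by (simp add: sum_subtractf)
  finally show ?thesis using ij by (intro exI[of _ c]) (auto simp: c_def)
next
  case True
  define S where "S = y ` {..D}"
  have cardS: "card S = D + 1" using True unfolding S_def by (simp add: card_image)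
  have "S \<subseteq> QV.span Bs" using F_span assms unfolding S_def by auto
  hence "\<not> QV.independent S \<or> card S \<le> D" using QV.independent_span_bound[OF Bs(1)] by blast
  hence "QV.dependent S" using cardS by auto
  then obtain t u where tu: "finite t" "t \<subseteq> S" "(\<Sum>v\<in>t. qscale (u v) v) = 0" "\<exists>v\<in>t. u v \<noteq> 0"
    unfolding QV.dependent_explicit by blast
  define r where "r i = (if y i \<in> t then u (y i) else 0)" for i
  define I where "I = {i\<in>{..D}. y i \<in> t}"
  have yI: "y ` I = t" using tu(2) unfolding I_def S_def by auto
  have injI: "inj_on y I" using True unfolding I_def by (auto intro: inj_on_subset)
  have "(\<Sum>i\<le>D. of_rat (r i) * y i) = (\<Sum>i\<in>I. of_rat (r i) * y i)"
    by (rule sum.mono_neutral_right) (auto simp: I_def r_def)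
  also have "\<dots> = (\<Sum>i\<in>I. qscale (u (y i)) (y i))" by (intro sum.cong) (auto simp: I_def r_def qscale_def)
  also have "\<dots> = (\<Sum>v\<in>t. qscale (u v) v)" using sum.reindex[OF injI, of "\<lambda>v. qscale (u v) v"] yI by simp
  finally have rsum: "(\<Sum>i\<le>D. of_rat (r i) * y i) = 0" using tu(3) by simp
  obtain v0 where v0: "v0 \<in> t" "u v0 \<noteq> 0" using tu(4) by blast
  then obtain i0 where "i0 \<in> I" "v0 = y i0" using yI by blast
  hence i0: "i0 \<le> D" "r i0 \<noteq> 0" using v0 unfolding I_def r_def by auto
  define a where "a i = fst (quotient_of (r i))" for i
  define b where "b i = snd (quotient_of (r i))" for i
  have rab: "r i = of_int (a i) / of_int (b i)" "b i > 0" for i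
  proof -
    show "r i = of_int (a i) / of_int (b i)" unfolding a_def b_def
      using quotient_of_div[of "r i" "fst (quotient_of (r i))" "snd (quotient_of (r i))"] by simp
    show "b i > 0" unfolding b_def by (rule quotient_of_denom_pos')
  qed
  define N where "N = (\<Prod>i\<le>D. b i)"
  define c where "c i = a i * (\<Prod>j\<in>{..D}-{i}. b j)" for i
  have cr: "of_int (c i) = of_rat (r i) * (of_int N :: complex)" if "i \<le> D" for i
  proof -
    have Ns: "N = b i * (\<Prod>j\<in>{..D}-{i}. b j)" unfolding N_def using that by (simp add: prod.remove)
    have e: "rat_of_int (a i) = r i * rat_of_int (b i)" using rab[of i] by simp
    have ai: "complex_of_int (a i) = of_rat (r i) * of_int (b i)"
      using arg_cong[OF e, of "of_rat :: rat \<Rightarrow> complex"] by (simp add: of_rat_mult)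
    have "(of_int (c i) :: complex) = of_int (a i) * of_int (\<Prod>j\<in>{..D}-{i}. b j)" by (simp add: c_def)
    also have "\<dots> = of_rat (r i) * (of_int (b i) * of_int (\<Prod>j\<in>{..D}-{i}. b j))" by (simp add: ai)
    also have "\<dots> = of_rat (r i) * of_int N" by (simp add: Ns)
    finally show ?thesis .
  qed
  have Npos: "N > 0" unfolding N_def by (rule prod_pos) (use rab(2) in blast)
  have "(\<Sum>i\<le>D. of_int (c i) * y i) = of_int N * (\<Sum>i\<le>D. of_rat (r i) * y i)"
  proof -
    have "(\<Sum>i\<le>D. of_int (c i) * y i) = (\<Sum>i\<le>D. of_int N * (of_rat (r i) * y i))"
      by (intro sum.cong refl) (simp add: cr)
    thus ?thesis by (simp add: sum_distrib_left)
  qed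
  also have "\<dots> = 0" using rsum by simp
  finally have "(\<Sum>i\<le>D. of_int (c i) * y i) = 0" .
  moreover have "c i0 \<noteq> 0"
  proof -
    have "complex_of_rat (r i0) * complex_of_int N \<noteq> 0" using i0(2) Npos by simp
    moreover have "c i0 = 0 \<Longrightarrow> complex_of_rat (r i0) * complex_of_int N = 0" using cr[OF i0(1)] by simp
    ultimately show ?thesis by blast
  qed
  ultimately show ?thesis using i0 by blast
qed

lemma dep_prime:
  assumes "\<And>i. i \<le> D \<Longrightarrow> y i \<in> F" and p: "(p::int) \<ge> 2"
  shows "\<exists>c :: nat \<Rightarrow> int. (\<Sum>i\<le>D. of_int (c i) * y i) = 0 \<and> (\<exists>i\<le>D. \<not> p dvd c i)"
proof -
  define P where "P c \<longleftrightarrow> (\<Sum>i\<le>D. of_int (c i) * y i) = 0 \<and> (\<exists>i\<le>D. c i \<noteq> (0::int))" for c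
  define m where "m c = (\<Sum>i\<le>D. nat \<bar>c i\<bar>)" for c :: "nat \<Rightarrow> int"
  obtain c0 where "P c0" using dep_nonzero[of y] assms(1) unfolding P_def by blast
  then obtain c where c: "P c" and cmin: "\<And>c'. P c' \<Longrightarrow> m c \<le> m c'"
    using ex_has_least_nat[of P c0 m] by blast
  show ?thesis
  proof (rule ccontr)
    assume "\<not> ?thesis"
    hence dv: "\<And>i. i \<le> D \<Longrightarrow> p dvd c i" using c unfolding P_def by blast
    define c' where "c' i = c i div p" for i
    have cc: "c i = p * c' i" if "i \<le> D" for i using dv[OF that] unfolding c'_def by simp
    have "of_int p * (\<Sum>i\<le>D. of_int (c' i) * y i) = (\<Sum>i\<le>D. of_int (c i) * (y i :: complex))"
      by (simp add: sum_distrib_left cc mult_ac)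
    hence s0: "(\<Sum>i\<le>D. of_int (c' i) * y i) = 0" using c p unfolding P_def by simp
    obtain i where i: "i \<le> D" "c i \<noteq> 0" using c unfolding P_def by auto
    have "c' i \<noteq> 0" using cc[OF i(1)] i(2) by auto
    hence Pc': "P c'" using s0 i unfolding P_def by auto
    have le: "nat \<bar>c' j\<bar> \<le> nat \<bar>c j\<bar>" if "j \<le> D" for j
    proof -
      have "1 * \<bar>c' j\<bar> \<le> p * \<bar>c' j\<bar>" using p by (intro mult_right_mono) auto
      thus ?thesis using cc[OF that] p by (simp add: abs_mult)
    qed
    have lt: "nat \<bar>c' i\<bar> < nat \<bar>c i\<bar>"
      using cc[OF i(1)] p \<open>c' i \<noteq> 0\<close> by (simp add: abs_mult)
    have "m c' < m c" unfolding m_def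
      by (rule sum_strict_mono_ex1) (use le lt i in auto)
    thus False using cmin[OF Pc'] by simp
  qed
qed

end

context nf
begin

lemma ideal_R: "is_ideal R P \<Longrightarrow> P \<subseteq> R" unfolding is_ideal_def by blast
lemma ideal_0: "is_ideal R P \<Longrightarrow> 0 \<in> P" unfolding is_ideal_def by blast
lemma ideal_add: "is_ideal R P \<Longrightarrow> a \<in> P \<Longrightarrow> b \<in> P \<Longrightarrow> a + b \<in> P" unfolding is_ideal_def by blast
lemma ideal_neg: "is_ideal R P \<Longrightarrow> a \<in> P \<Longrightarrow> - a \<in> P" unfolding is_ideal_def by blast
lemma ideal_multL: "is_ideal R P \<Longrightarrow> r \<in> R \<Longrightarrow> a \<in> P \<Longrightarrow> r * a \<in> P" unfolding is_ideal_def by blast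
lemma ideal_multR: "is_ideal R P \<Longrightarrow> r \<in> R \<Longrightarrow> a \<in> P \<Longrightarrow> a * r \<in> P"
  using ideal_multL[of P r a] by (simp add: mult.commute)
lemma ideal_diff: "is_ideal R P \<Longrightarrow> a \<in> P \<Longrightarrow> b \<in> P \<Longrightarrow> a - b \<in> P"
proof -
  assume "is_ideal R P" "a \<in> P" "b \<in> P"
  hence "a + - b \<in> P" using ideal_add ideal_neg by blast
  thus ?thesis by simp
qed
lemma ideal_int: "is_ideal R P \<Longrightarrow> a \<in> P \<Longrightarrow> of_int k * a \<in> P"
  using ideal_multL[OF _ Rint] by blast
lemma ideal_sum: "is_ideal R P \<Longrightarrow> (\<And>i. i \<in> A \<Longrightarrow> f i \<in> P) \<Longrightarrow> sum f A \<in> P"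
proof (induction A rule: infinite_finite_induct)
  case (infinite A) then show ?case using ideal_0 by simp
next
  case empty then show ?case using ideal_0 by simp
next
  case (insert x F) then show ?case using ideal_add by simp
qed
lemma ideal_pow: "is_ideal R P \<Longrightarrow> a \<in> P \<Longrightarrow> n \<ge> 1 \<Longrightarrow> a ^ n \<in> P"
proof (induction n)
  case 0 thus ?case by simp
next
  case (Suc n)
  show ?case
  proof (cases "n = 0")
    case True thus ?thesis using Suc by simp
  next
    case False
    hence an: "a ^ n \<in> P" using Suc by simp
    have "a \<in> R" using ideal_R[OF Suc.prems(1)] Suc.prems(2) by blast
    hence "a * a ^ n \<in> P" using ideal_multL[OF Suc.prems(1) _ an] by blast
    thus ?thesis by simp
  qed
qed
lemma ideal_one: "is_ideal R P \<Longrightarrow> 1 \<in> P \<Longrightarrow> P = R"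
proof -
  assume I: "is_ideal R P" "1 \<in> P"
  have "R \<subseteq> P"
  proof
    fix r assume "r \<in> R"
    hence "r * 1 \<in> P" using ideal_multL[OF I(1) _ I(2)] by blast
    thus "r \<in> P" by simp
  qed
  thus ?thesis using ideal_R[OF I(1)] by blast
qed

lemma prime_ideal: "is_prime_ideal R P \<Longrightarrow> is_ideal R P" unfolding is_prime_ideal_def by blast
lemma prime_ne: "is_prime_ideal R P \<Longrightarrow> P \<noteq> R" unfolding is_prime_ideal_def by blast
lemma prime_mult: "is_prime_ideal R P \<Longrightarrow> a \<in> R \<Longrightarrow> b \<in> R \<Longrightarrow> a * b \<in> P \<Longrightarrow> a \<in> P \<or> b \<in> P"
  unfolding is_prime_ideal_def by blast
lemma prime_1: "is_prime_ideal R P \<Longrightarrow> 1 \<notin> P"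
  using ideal_one prime_ideal prime_ne by blast
lemma prime_pow: "is_prime_ideal R P \<Longrightarrow> a \<in> R \<Longrightarrow> a \<notin> P \<Longrightarrow> a ^ n \<notin> P"
proof (induction n)
  case 0 thus ?case using prime_1 by simp
next
  case (Suc n)
  thus ?case using prime_mult[OF Suc.prems(1) Suc.prems(2) Rpow[OF Suc.prems(2)]] by auto
qed

lemma fp_prime: "P \<in> finite_places F \<Longrightarrow> is_prime_ideal R P" unfolding finite_places_def by blast
lemma fp_ideal: "P \<in> finite_places F \<Longrightarrow> is_ideal R P" using fp_prime prime_ideal by blast

lemma int_in_ideal:
  assumes I: "is_ideal R P" and a: "a \<in> P" "a \<noteq> 0"
  shows "\<exists>c::int. c \<noteq> 0 \<and> of_int c \<in> P"
proof -
  have aR: "a \<in> R" using a ideal_R[OF I] by blast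
  then obtain p where p: "poly (map_poly of_int p) a = 0" "lead_coeff p = (1::int)"
    using R_iff algebraic_int_altdef_ipoly by blast
  have ex: "\<exists>i. coeff p i \<noteq> 0" using p(2) by (metis zero_neq_one)
  define i where "i = (LEAST i. coeff p i \<noteq> 0)"
  have ci: "coeff p i \<noteq> 0" unfolding i_def using LeastI_ex[OF ex] .
  have cj: "coeff p j = 0" if "j < i" for j using not_less_Least[of j "\<lambda>i. coeff p i \<noteq> 0"] that unfolding i_def by blast
  have ile: "i \<le> degree p" using ci le_degree by blast
  define m where "m = degree p"
  have "0 = (\<Sum>j\<le>m. of_int (coeff p j) * a ^ j)"
    using p(1) unfolding m_def by (simp add: poly_altdef degree_map_poly coeff_map_poly)
  also have "\<dots> = (\<Sum>j\<in>{i..m}. of_int (coeff p j) * a ^ j)"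
    by (rule sum.mono_neutral_right) (auto simp: cj)
  also have "\<dots> = (\<Sum>j\<in>{i..m}. a ^ i * (of_int (coeff p j) * a ^ (j - i)))"
  proof (intro sum.cong refl)
    fix j assume "j \<in> {i..m}"
    hence "a ^ j = a ^ i * a ^ (j - i)" by (simp add: power_add[symmetric])
    thus "of_int (coeff p j) * a ^ j = a ^ i * (of_int (coeff p j) * a ^ (j - i))" by simp
  qed
  also have "\<dots> = a ^ i * (\<Sum>j\<in>{i..m}. of_int (coeff p j) * a ^ (j - i))"
    by (simp add: sum_distrib_left)
  finally have "(\<Sum>j\<in>{i..m}. of_int (coeff p j) * a ^ (j - i)) = 0" using a(2) by simp
  moreover have "{i..m} = insert i {Suc i..m}" using ile unfolding m_def by auto
  ultimately have "of_int (coeff p i) + (\<Sum>j\<in>{Suc i..m}. of_int (coeff p j) * a ^ (j - i)) = 0"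
    by simp
  hence eq: "of_int (coeff p i) = - (\<Sum>j\<in>{Suc i..m}. of_int (coeff p j) * a ^ (j - i))"
    by (simp add: eq_neg_iff_add_eq_0)
  have "(\<Sum>j\<in>{Suc i..m}. of_int (coeff p j) * a ^ (j - i)) \<in> P"
  proof (rule ideal_sum[OF I])
    fix j assume "j \<in> {Suc i..m}"
    hence "j - i \<ge> 1" by auto
    hence "a ^ (j - i) \<in> P" using ideal_pow[OF I a(1)] by blast
    thus "of_int (coeff p j) * a ^ (j - i) \<in> P" using ideal_int[OF I] by blast
  qed
  hence "of_int (coeff p i) \<in> P" using eq ideal_neg[OF I] by simp
  thus ?thesis using ci by blast
qed

lemma prime_in_ideal:
  assumes P: "is_prime_ideal R P" and c: "c \<noteq> 0" "of_int c \<in> P"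
  shows "\<exists>p::int. prime p \<and> p dvd c \<and> of_int p \<in> P"
  using c
proof (induction "nat \<bar>c\<bar>" arbitrary: c rule: less_induct)
  case less
  show ?case
  proof (cases "\<bar>c\<bar> = 1")
    case True
    hence "c = 1 \<or> c = -1" by auto
    hence "1 \<in> P" using less.prems ideal_neg[OF prime_ideal[OF P], of "of_int c"] by auto
    thus ?thesis using prime_1[OF P] by blast
  next
    case False
    then obtain q where q: "prime q" "q dvd c" using prime_factor_int by blast
    then obtain e where e: "c = q * e" by blast
    have "of_int q * of_int e \<in> P" using less.prems e by simp
    hence "of_int q \<in> P \<or> of_int e \<in> P" using prime_mult[OF P Rint Rint] by blast
    thus ?thesis
    proof
      assume "of_int q \<in> P" thus ?thesis using q by blast
    next
      assume eP: "of_int e \<in> P"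
      have q1: "q > 1" using q prime_gt_1_int by blast
      have e0: "e \<noteq> 0" using e less.prems by auto
      have "\<bar>c\<bar> = \<bar>q\<bar> * \<bar>e\<bar>" using e by (simp add: abs_mult)
      hence "\<bar>e\<bar> < \<bar>c\<bar>" using q1 e0 by (simp add: abs_mult)
      hence "nat \<bar>e\<bar> < nat \<bar>c\<bar>" by simp
      then obtain p' where "prime p'" "p' dvd e" "of_int p' \<in> P" using less.hyps[of e] e0 eP by blast
      thus ?thesis using e by auto
    qed
  qed
qed

lemma fp_has_prime:
  assumes P: "P \<in> finite_places F"
  shows "\<exists>p::int. prime p \<and> of_int p \<in> P"
proof -
  have I: "is_ideal R P" using fp_ideal[OF P] .
  have "P \<noteq> {0}" using P unfolding finite_places_def by blast
  then obtain a where "a \<in> P" "a \<noteq> 0" using ideal_0[OF I] by blast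
  then obtain c where "c \<noteq> 0" "of_int c \<in> P" using int_in_ideal[OF I] by blast
  thus ?thesis using prime_in_ideal[OF fp_prime[OF P]] by blast
qed

lemma coprime_not_in:
  assumes P: "is_prime_ideal R P" and p: "prime p" "of_int p \<in> P" and k: "\<not> p dvd k"
  shows "of_int k \<notin> P"
proof
  assume kP: "of_int k \<in> P"
  have "coprime p k" using prime_imp_coprime[OF p(1) k] .
  hence "gcd k p = 1" by (simp add: coprime_iff_gcd_eq_1 gcd.commute)
  then obtain u v where uv: "u * k + v * p = 1" using bezout_int[of k p] by auto
  have "of_int u * of_int k + of_int v * of_int p \<in> P"
    using ideal_add[OF prime_ideal[OF P] ideal_int[OF prime_ideal[OF P] kP] ideal_int[OF prime_ideal[OF P] p(2)]] .
  hence "of_int (u * k + v * p) \<in> P" by simp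
  thus False using uv prime_1[OF P] by simp
qed

end

definition cosP :: "complex set \<Rightarrow> complex \<Rightarrow> complex set" where
  "cosP P a = (\<lambda>p. a + p) ` P"

context nf
begin

lemma qfin_cos: "q_fin F P = card (cosP P ` R)"
  unfolding q_fin_def cosP_def by simp

lemma cos_eq:
  assumes I: "is_ideal R P"
  shows "cosP P a = cosP P b \<longleftrightarrow> a - b \<in> P"
proof
  assume e: "cosP P a = cosP P b"
  have "a \<in> cosP P a" unfolding cosP_def using ideal_0[OF I] by force
  hence "a \<in> cosP P b" using e by simp
  then obtain p where "p \<in> P" "a = b + p" unfolding cosP_def by auto
  thus "a - b \<in> P" by simp
next
  assume ab: "a - b \<in> P"
  have ab': "b - a \<in> P" using ideal_neg[OF I ab] by simp
  show "cosP P a = cosP P b"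
  proof (intro equalityI subsetI)
    fix x assume "x \<in> cosP P a"
    then obtain p where p: "p \<in> P" "x = a + p" unfolding cosP_def by auto
    have "a - b + p \<in> P" using ideal_add[OF I ab p(1)] .
    moreover have "x = b + (a - b + p)" using p by simp
    ultimately show "x \<in> cosP P b" unfolding cosP_def by blast
  next
    fix x assume "x \<in> cosP P b"
    then obtain p where p: "p \<in> P" "x = b + p" unfolding cosP_def by auto
    have "b - a + p \<in> P" using ideal_add[OF I ab' p(1)] .
    moreover have "x = a + (b - a + p)" using p by simp
    ultimately show "x \<in> cosP P a" unfolding cosP_def by blast
  qed
qed

definition indepP :: "complex set \<Rightarrow> int \<Rightarrow> (nat \<Rightarrow> complex) \<Rightarrow> nat \<Rightarrow> bool" where
  "indepP P p y k \<longleftrightarrow> (\<forall>c. (\<Sum>i<k. of_int (c i) * y i) \<in> P \<longrightarrow> (\<forall>i<k. p dvd c i))"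

lemma indepP_bound:
  assumes I: "is_ideal R P" and p: "prime p" and y: "\<And>i. i < k \<Longrightarrow> y i \<in> R" and ind: "indepP P p y k"
  shows "k \<le> D"
proof (rule ccontr)
  assume "\<not> k \<le> D"
  hence kD: "D < k" by simp
  have "\<And>i. i \<le> D \<Longrightarrow> y i \<in> F" using y kD RF by auto
  then obtain c where c: "(\<Sum>i\<le>D. of_int (c i) * y i) = 0" "\<exists>i\<le>D. \<not> p dvd c i"
    using dep_prime[of y p] prime_ge_2_int[OF p] by blast
  define c' where "c' i = (if i \<le> D then c i else 0)" for i
  have "(\<Sum>i<k. of_int (c' i) * y i) = (\<Sum>i\<le>D. of_int (c' i) * y i)"
    by (rule sum.mono_neutral_right) (use kD in \<open>auto simp: c'_def\<close>)
  also have "\<dots> = 0" using c(1) by (simp add: c'_def)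
  finally have "(\<Sum>i<k. of_int (c' i) * y i) \<in> P" using ideal_0[OF I] by simp
  hence all: "\<forall>i<k. p dvd c' i" using ind unfolding indepP_def by blast
  obtain i where i: "i \<le> D" "\<not> p dvd c i" using c(2) by blast
  have "p dvd c' i" using all i(1) kD by simp
  thus False using i unfolding c'_def by simp
qed

lemma int_mult_in: "is_ideal R P \<Longrightarrow> of_int p \<in> P \<Longrightarrow> p dvd k \<Longrightarrow> z \<in> R \<Longrightarrow> of_int k * z \<in> P"
proof -
  assume I: "is_ideal R P" and pP: "of_int p \<in> P" and "p dvd k" and z: "z \<in> R"
  then obtain e where e: "k = p * e" by blast
  have "of_int p * z \<in> P" using ideal_multR[OF I z pP] .
  hence "of_int e * (of_int p * z) \<in> P" using ideal_int[OF I] by blast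
  thus ?thesis using e by (simp add: mult_ac)
qed

lemma finite_cosets:
  assumes P: "is_prime_ideal R P" and p: "prime p" "of_int p \<in> P"
  shows "finite (cosP P ` R)"
proof -
  have I: "is_ideal R P" using prime_ideal[OF P] .
  define K where "K = {k. \<exists>y. (\<forall>i<k. y i \<in> R) \<and> indepP P p y k}"
  have K0: "0 \<in> K" unfolding K_def indepP_def by auto
  have Kb: "\<And>k. k \<in> K \<Longrightarrow> k \<le> D" unfolding K_def using indepP_bound[OF I p(1)] by blast
  hence finK: "finite K" by (meson finite_atMost finite_subset atMost_iff subsetI)
  define k where "k = Max K"
  have kK: "k \<in> K" unfolding k_def using Max_in[OF finK] K0 by blast
  have kmax: "Suc k \<notin> K" using Max_ge[OF finK] unfolding k_def by fastforce
  from kK obtain y where y: "\<And>i. i < k \<Longrightarrow> y i \<in> R" "indepP P p y k" unfolding K_def by blast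
  define Dset where "Dset = {d. \<forall>i. (i \<in> {..<k} \<longrightarrow> d i \<in> {0..<p}) \<and> (i \<notin> {..<k} \<longrightarrow> d i = 0)}"
  have finD: "finite Dset" unfolding Dset_def by (rule finite_set_of_finite_funs) auto
  have sub: "cosP P ` R \<subseteq> (\<lambda>d. cosP P (\<Sum>i<k. of_int (d i) * y i)) ` Dset"
  proof
    fix C assume "C \<in> cosP P ` R"
    then obtain z where z: "z \<in> R" "C = cosP P z" by blast
    define y' where "y' = y(k := z)"
    have y'R: "\<forall>i<Suc k. y' i \<in> R" using y(1) z(1) unfolding y'_def by auto
    hence "\<not> indepP P p y' (Suc k)" using kmax unfolding K_def by blast
    then obtain c where c: "(\<Sum>i<Suc k. of_int (c i) * y' i) \<in> P" "\<exists>i<Suc k. \<not> p dvd c i"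
      unfolding indepP_def by blast
    have sumsplit: "(\<Sum>i<Suc k. of_int (c i) * y' i) = (\<Sum>i<k. of_int (c i) * y i) + of_int (c k) * z"
      unfolding y'_def by (simp add: lessThan_Suc)
    have ck: "\<not> p dvd c k"
    proof
      assume "p dvd c k"
      hence "of_int (c k) * z \<in> P" using int_mult_in[OF I p(2) _ z(1)] by blast
      hence "(\<Sum>i<Suc k. of_int (c i) * y' i) - of_int (c k) * z \<in> P" using ideal_diff[OF I c(1)] by blast
      hence "(\<Sum>i<k. of_int (c i) * y i) \<in> P" using sumsplit by simp
      hence "\<forall>i<k. p dvd c i" using y(2) unfolding indepP_def by blast
      thus False using c(2) \<open>p dvd c k\<close> less_Suc_eq by auto
    qed
    have "coprime (c k) p" using prime_imp_coprime[OF p(1) ck] by (simp add: coprime_commute)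
    hence "gcd (c k) p = 1" by (simp add: coprime_iff_gcd_eq_1)
    then obtain u v where uv: "u * c k + v * p = 1" using bezout_int[of "c k" p] by auto
    define d where "d i = (if i < k then (- u * c i) mod p else 0)" for i
    have p0: "p > 0" using prime_gt_1_int[OF p(1)] by simp
    have dD: "d \<in> Dset" unfolding Dset_def d_def using p0 by auto
    have "1 - u * c k = v * p" using uv by linarith
    hence "p dvd 1 - u * c k" by (metis dvd_triv_right)
    hence t1: "of_int (1 - u * c k) * z \<in> P" by (rule int_mult_in[OF I p(2) _ z(1)])
    have t2: "of_int u * (\<Sum>i<Suc k. of_int (c i) * y' i) \<in> P" using ideal_int[OF I c(1)] .
    have t3: "(\<Sum>i<k. of_int (u * c i + d i) * y i) \<in> P"
    proof (rule ideal_sum[OF I])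
      fix i assume i: "i \<in> {..<k}"
      have m: "(- u * c i) mod p = - u * c i - ((- u * c i) div p) * p"
        by (simp add: minus_div_mult_eq_mod[symmetric])
      have "u * c i + d i = p * (- ((- u * c i) div p))" unfolding d_def using i m by simp
      hence "p dvd u * c i + d i" by (metis dvd_triv_left)
      thus "of_int (u * c i + d i) * y i \<in> P" using int_mult_in[OF I p(2) _ y(1)] i by blast
    qed
    have eq: "z - (\<Sum>i<k. of_int (d i) * y i) = of_int (1 - u * c k) * z + of_int u * (\<Sum>i<Suc k. of_int (c i) * y' i)
        - (\<Sum>i<k. of_int (u * c i + d i) * y i)"
    proof -
      define S1 where "S1 = (\<Sum>i<k. of_int (c i) * y i)"
      define S2 where "S2 = (\<Sum>i<k. of_int (d i) * y i)"
      have "(\<Sum>i<k. of_int (u * c i + d i) * y i) = (\<Sum>i<k. of_int u * (of_int (c i) * y i) + of_int (d i) * y i)"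
        by (intro sum.cong refl) (simp add: algebra_simps)
      also have "\<dots> = of_int u * S1 + S2" unfolding S1_def S2_def by (simp add: sum.distrib sum_distrib_left)
      finally have e3: "(\<Sum>i<k. of_int (u * c i + d i) * y i) = of_int u * S1 + S2" .
      show ?thesis unfolding sumsplit e3 S1_def[symmetric] S2_def[symmetric] by (simp add: algebra_simps)
    qed
    have "z - (\<Sum>i<k. of_int (d i) * y i) \<in> P"
      unfolding eq by (intro ideal_diff[OF I] ideal_add[OF I] t1 t2 t3)
    hence "C = cosP P (\<Sum>i<k. of_int (d i) * y i)" using z(2) cos_eq[OF I] by blast
    thus "C \<in> (\<lambda>d. cosP P (\<Sum>i<k. of_int (d i) * y i)) ` Dset" using dD by blast
  qed
  show ?thesis using finite_subset[OF sub finite_imageI[OF finD]] .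
qed

lemma card_cosets_ge:
  assumes P: "is_prime_ideal R P" and p: "prime p" "of_int p \<in> P"
  shows "card (cosP P ` R) \<ge> nat p"
proof -
  have I: "is_ideal R P" using prime_ideal[OF P] .
  have inj: "inj_on (\<lambda>i. cosP P (of_int i)) {0..<p}"
  proof (rule inj_onI)
    fix i j assume ij: "i \<in> {0..<p}" "j \<in> {0..<p}" "cosP P (of_int i) = cosP P (of_int j)"
    hence "of_int (i - j) \<in> P" using cos_eq[OF I] by simp
    hence "p dvd (i - j)" using coprime_not_in[OF P p] by blast
    moreover have "\<bar>i - j\<bar> < p" using ij by auto
    ultimately show "i = j"
    proof (cases "i = j")
      case False
      hence "\<bar>p\<bar> \<le> \<bar>i - j\<bar>" using dvd_imp_le_int[of "i - j" p] \<open>p dvd (i - j)\<close> by simp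
      thus ?thesis using \<open>\<bar>i - j\<bar> < p\<close> by linarith
    qed
  qed
  have "(\<lambda>i. cosP P (of_int i)) ` {0..<p} \<subseteq> cosP P ` R" using Rint by blast
  hence "card ((\<lambda>i. cosP P (of_int i)) ` {0..<p}) \<le> card (cosP P ` R)"
    using card_mono finite_cosets[OF P p] by blast
  thus ?thesis using card_image[OF inj] by simp
qed

lemma fp_qfin:
  assumes P: "P \<in> finite_places F"
  shows "\<exists>p::int. prime p \<and> of_int p \<in> P \<and> nat p \<le> q_fin F P \<and> finite (cosP P ` R)"
proof -
  obtain p where p: "prime p" "of_int p \<in> P" using fp_has_prime[OF P] by blast
  have "nat p \<le> q_fin F P" unfolding qfin_cos using card_cosets_ge[OF fp_prime[OF P] p] .
  thus ?thesis using p finite_cosets[OF fp_prime[OF P] p] by blast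
qed

lemma fp_maximal:
  assumes P: "P \<in> finite_places F" and Q: "is_prime_ideal R Q" and PQ: "P \<subseteq> Q"
  shows "P = Q"
proof (rule ccontr)
  assume "P \<noteq> Q"
  then obtain x where x: "x \<in> Q" "x \<notin> P" using PQ by blast
  have IP: "is_ideal R P" using fp_ideal[OF P] .
  have IQ: "is_ideal R Q" using prime_ideal[OF Q] .
  have xR: "x \<in> R" using x ideal_R[OF IQ] by blast
  obtain p where "prime p" "of_int p \<in> P" "finite (cosP P ` R)" using fp_qfin[OF P] by blast
  have "(\<lambda>n. cosP P (x ^ n)) ` UNIV \<subseteq> cosP P ` R" using Rpow[OF xR] by blast
  hence fin: "finite ((\<lambda>n. cosP P (x ^ n)) ` UNIV)" using \<open>finite (cosP P ` R)\<close> finite_subset by blast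
  have "\<not> inj (\<lambda>n. cosP P (x ^ n))"
  proof
    assume "inj (\<lambda>n. cosP P (x ^ n))"
    hence "finite (UNIV :: nat set)" using fin finite_imageD by blast
    thus False by simp
  qed
  then obtain m n where mn: "m \<noteq> n" "cosP P (x ^ m) = cosP P (x ^ n)" unfolding inj_def by blast
  have "\<exists>m n. m < n \<and> cosP P (x ^ m) = cosP P (x ^ n)"
    using mn by (metis linorder_neqE_nat)
  then obtain m n where mn: "m < n" "cosP P (x ^ m) = cosP P (x ^ n)" by blast
  have d: "x ^ m - x ^ n \<in> P" using mn(2) cos_eq[OF IP] by blast
  have "x ^ m - x ^ n = x ^ m * (1 - x ^ (n - m))"
    using mn(1) by (simp add: algebra_simps power_add[symmetric])
  hence "x ^ m * (1 - x ^ (n - m)) \<in> P" using d by simp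
  moreover have "x ^ m \<notin> P" using prime_pow[OF fp_prime[OF P] xR x(2)] .
  moreover have "1 - x ^ (n - m) \<in> R" using Rdiff[OF R1 Rpow[OF xR]] .
  ultimately have "1 - x ^ (n - m) \<in> P" using prime_mult[OF fp_prime[OF P] Rpow[OF xR]] by blast
  hence a: "1 - x ^ (n - m) \<in> Q" using PQ by blast
  have b: "x ^ (n - m) \<in> Q" using ideal_pow[OF IQ x(1)] mn(1) by simp
  have "1 - x ^ (n - m) + x ^ (n - m) \<in> Q" using ideal_add[OF IQ a b] .
  thus False using prime_1[OF Q] by simp
qed

lemma fp_inverse:
  assumes P: "P \<in> finite_places F" and u: "u \<in> R" "u \<notin> P"
  shows "\<exists>w\<in>R. u * w - 1 \<in> P"
proof -
  have I: "is_ideal R P" using fp_ideal[OF P] .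
  obtain p where "prime p" "of_int p \<in> P" and fin: "finite (cosP P ` R)" using fp_qfin[OF P] by blast
  define rep where "rep C = (SOME c. c \<in> R \<and> cosP P c = C)" for C
  have rep: "rep C \<in> R" "cosP P (rep C) = C" if "C \<in> cosP P ` R" for C
  proof -
    have "\<exists>c. c \<in> R \<and> cosP P c = C" using that by blast
    from someI_ex[OF this] show "rep C \<in> R" "cosP P (rep C) = C" unfolding rep_def by blast+
  qed
  define h where "h C = cosP P (u * rep C)" for C
  have hsub: "h ` (cosP P ` R) \<subseteq> cosP P ` R" unfolding h_def using rep(1) Rmult[OF u(1)] by blast
  have hinj: "inj_on h (cosP P ` R)"
  proof (rule inj_onI)
    fix C1 C2 assume C: "C1 \<in> cosP P ` R" "C2 \<in> cosP P ` R" "h C1 = h C2"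
    hence "u * rep C1 - u * rep C2 \<in> P" unfolding h_def using cos_eq[OF I] by blast
    hence "u * (rep C1 - rep C2) \<in> P" by (simp add: algebra_simps)
    hence "rep C1 - rep C2 \<in> P" using prime_mult[OF fp_prime[OF P] u(1) Rdiff[OF rep(1)[OF C(1)] rep(1)[OF C(2)]]] u(2) by blast
    hence "cosP P (rep C1) = cosP P (rep C2)" using cos_eq[OF I] by blast
    thus "C1 = C2" using rep(2) C by simp
  qed
  have "h ` (cosP P ` R) = cosP P ` R" using endo_inj_surj[OF fin hsub hinj] .
  moreover have "cosP P 1 \<in> cosP P ` R" using R1 by blast
  ultimately have "\<exists>C\<in>cosP P ` R. h C = cosP P 1" by (metis imageE)
  then obtain C where C: "C \<in> cosP P ` R" "h C = cosP P 1" by blast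
  hence "u * rep C - 1 \<in> P" unfolding h_def using cos_eq[OF I] by blast
  thus ?thesis using rep(1)[OF C(1)] by blast
qed

end

context nf
begin

lemma prod_in_ideal:
  assumes "finite J" "j0 \<in> J" "\<And>j. j \<in> J \<Longrightarrow> y j \<in> R" "is_ideal R Q" "y j0 \<in> Q"
  shows "prod y J \<in> Q"
proof -
  have "prod y J = y j0 * prod y (J - {j0})" using assms(1,2) by (simp add: prod.remove)
  moreover have "prod y (J - {j0}) \<in> R" using assms(3) by (intro Rprod) auto
  ultimately show ?thesis using ideal_multR[OF assms(4) _ assms(5)] by simp
qed

lemma prod_notin_prime:
  assumes "finite J" "\<And>j. j \<in> J \<Longrightarrow> y j \<in> R" "\<And>j. j \<in> J \<Longrightarrow> y j \<notin> Q" "is_prime_ideal R Q"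
  shows "prod y J \<notin> Q"
  using assms
proof (induction J rule: finite_induct)
  case empty thus ?case using prime_1 by simp
next
  case (insert j J)
  have "prod y J \<in> R" using insert.prems(1) by (intro Rprod) auto
  moreover have "prod y J \<notin> Q" using insert by auto
  moreover have "y j \<in> R" "y j \<notin> Q" using insert.prems by auto
  ultimately show ?case using prime_mult[OF insert.prems(3)] insert.hyps by auto
qed

lemma places_above_bound:
  assumes p: "prime p" and T: "finite T" "T \<subseteq> {P \<in> finite_places F. of_int p \<in> P}"
  shows "card T \<le> D"
proof (rule ccontr)
  assume "\<not> card T \<le> D"
  hence cT: "D < card T" by simp
  obtain h where h: "bij_betw h {0..<card T} T" using ex_bij_betw_nat_finite[OF T(1)] by blast
  define Pl where "Pl i = h i" for i
  have Pl_in: "Pl i \<in> finite_places F" "of_int p \<in> Pl i" if "i \<le> D" for i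
    using h T(2) that cT unfolding Pl_def bij_betw_def by auto
  have Pl_inj: "Pl i \<noteq> Pl j" if "i \<le> D" "j \<le> D" "i \<noteq> j" for i j
    using h that cT unfolding Pl_def bij_betw_def inj_on_def by auto
  have ex: "\<exists>x. x \<in> Pl j \<and> x \<notin> Pl i" if "i \<le> D" "j \<le> D" "i \<noteq> j" for i j
  proof (rule ccontr)
    assume "\<not> ?thesis"
    hence "Pl j \<subseteq> Pl i" by blast
    hence "Pl j = Pl i" using fp_maximal[OF Pl_in(1)[OF that(2)] fp_prime[OF Pl_in(1)[OF that(1)]]] by blast
    thus False using Pl_inj[OF that(2,1)] that(3) by simp
  qed
  define yy where "yy i j = (SOME x. x \<in> Pl j \<and> x \<notin> Pl i)" for i j
  have yy: "yy i j \<in> Pl j" "yy i j \<notin> Pl i" if "i \<le> D" "j \<le> D" "i \<noteq> j" for i j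
    using someI_ex[OF ex[OF that]] unfolding yy_def by blast+
  have yyR: "yy i j \<in> R" if "i \<le> D" "j \<le> D" "i \<noteq> j" for i j
    using yy(1)[OF that] ideal_R[OF fp_ideal[OF Pl_in(1)[OF that(2)]]] by blast
  define e where "e i = (\<Prod>j\<in>{..D}-{i}. yy i j)" for i
  have eR: "e i \<in> R" if "i \<le> D" for i unfolding e_def using yyR that by (intro Rprod) auto
  have e_in: "e i \<in> Pl j" if "i \<le> D" "j \<le> D" "i \<noteq> j" for i j
    unfolding e_def
    by (rule prod_in_ideal[of _ j]) (use that yyR yy fp_ideal[OF Pl_in(1)[OF that(2)]] in auto)
  have e_notin: "e i \<notin> Pl i" if "i \<le> D" for i
    unfolding e_def
    by (rule prod_notin_prime) (use that yyR yy fp_prime[OF Pl_in(1)[OF that]] in auto)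
  have "\<And>i. i \<le> D \<Longrightarrow> e i \<in> F" using eR RF by blast
  then obtain c where c: "(\<Sum>i\<le>D. of_int (c i) * e i) = 0" "\<exists>i\<le>D. \<not> p dvd c i"
    using dep_prime[of e p] prime_ge_2_int[OF p] by blast
  then obtain i0 where i0: "i0 \<le> D" "\<not> p dvd c i0" by blast
  have Ii: "is_ideal R (Pl i0)" using fp_ideal[OF Pl_in(1)[OF i0(1)]] .
  have "(\<Sum>i\<le>D. of_int (c i) * e i) = of_int (c i0) * e i0 + (\<Sum>i\<in>{..D}-{i0}. of_int (c i) * e i)"
    using i0(1) by (simp add: sum.remove)
  hence eq: "of_int (c i0) * e i0 = - (\<Sum>i\<in>{..D}-{i0}. of_int (c i) * e i)"
    using c(1) by (simp add: eq_neg_iff_add_eq_0)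
  have "(\<Sum>i\<in>{..D}-{i0}. of_int (c i) * e i) \<in> Pl i0"
  proof (rule ideal_sum[OF Ii])
    fix i assume "i \<in> {..D}-{i0}"
    hence "e i \<in> Pl i0" using e_in[of i i0] i0(1) by auto
    thus "of_int (c i) * e i \<in> Pl i0" using ideal_int[OF Ii] by blast
  qed
  hence "of_int (c i0) * e i0 \<in> Pl i0" using eq ideal_neg[OF Ii] by simp
  hence "of_int (c i0) \<in> Pl i0 \<or> e i0 \<in> Pl i0"
    using prime_mult[OF fp_prime[OF Pl_in(1)[OF i0(1)]] Rint eR[OF i0(1)]] by blast
  thus False using coprime_not_in[OF fp_prime[OF Pl_in(1)[OF i0(1)]] p Pl_in(2)[OF i0(1)] i0(2)]
    e_notin[OF i0(1)] by blast
qed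

lemma places_above_finite:
  assumes p: "prime p"
  shows "finite {P \<in> finite_places F. of_int p \<in> P}" "card {P \<in> finite_places F. of_int p \<in> P} \<le> D"
proof -
  show fin: "finite {P \<in> finite_places F. of_int p \<in> P}"
  proof (rule ccontr)
    assume "\<not> ?thesis"
    then obtain T where "finite T" "card T = Suc D" "T \<subseteq> {P \<in> finite_places F. of_int p \<in> P}"
      using infinite_arbitrarily_large by blast
    thus False using places_above_bound[OF p] by fastforce
  qed
  show "card {P \<in> finite_places F. of_int p \<in> P} \<le> D"
    using places_above_bound[OF p fin] by blast
qed

end

context nf
begin

lemma int_multiple:
  assumes aR: "a \<in> R" and a0: "a \<noteq> 0"
  shows "\<exists>c::int. c \<noteq> 0 \<and> (\<exists>r\<in>R. of_int c = a * r)"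
proof -
  obtain p where p: "poly (map_poly of_int p) a = 0" "lead_coeff p = (1::int)"
    using aR R_iff algebraic_int_altdef_ipoly by blast
  have ex: "\<exists>i. coeff p i \<noteq> 0" using p(2) by (metis zero_neq_one)
  define i where "i = (LEAST i. coeff p i \<noteq> 0)"
  have ci: "coeff p i \<noteq> 0" unfolding i_def using LeastI_ex[OF ex] .
  have cj: "coeff p j = 0" if "j < i" for j using not_less_Least[of j "\<lambda>i. coeff p i \<noteq> 0"] that unfolding i_def by blast
  have ile: "i \<le> degree p" using ci le_degree by blast
  define m where "m = degree p"
  have "0 = (\<Sum>j\<le>m. of_int (coeff p j) * a ^ j)"
    using p(1) unfolding m_def by (simp add: poly_altdef degree_map_poly coeff_map_poly)
  also have "\<dots> = (\<Sum>j\<in>{i..m}. of_int (coeff p j) * a ^ j)"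
    by (rule sum.mono_neutral_right) (auto simp: cj)
  also have "\<dots> = (\<Sum>j\<in>{i..m}. a ^ i * (of_int (coeff p j) * a ^ (j - i)))"
  proof (intro sum.cong refl)
    fix j assume "j \<in> {i..m}"
    hence "a ^ j = a ^ i * a ^ (j - i)" by (simp add: power_add[symmetric])
    thus "of_int (coeff p j) * a ^ j = a ^ i * (of_int (coeff p j) * a ^ (j - i))" by simp
  qed
  also have "\<dots> = a ^ i * (\<Sum>j\<in>{i..m}. of_int (coeff p j) * a ^ (j - i))"
    by (simp add: sum_distrib_left)
  finally have "(\<Sum>j\<in>{i..m}. of_int (coeff p j) * a ^ (j - i)) = 0" using a0 by simp
  moreover have "{i..m} = insert i {Suc i..m}" using ile unfolding m_def by auto
  ultimately have "of_int (coeff p i) + (\<Sum>j\<in>{Suc i..m}. of_int (coeff p j) * a ^ (j - i)) = 0"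
    by simp
  hence eq: "of_int (coeff p i) = - (\<Sum>j\<in>{Suc i..m}. of_int (coeff p j) * a ^ (j - i))"
    by (simp add: eq_neg_iff_add_eq_0)
  have "(\<Sum>j\<in>{Suc i..m}. of_int (coeff p j) * a ^ (j - i)) = (\<Sum>j\<in>{Suc i..m}. a * (of_int (coeff p j) * a ^ (j - i - 1)))"
  proof (intro sum.cong refl)
    fix j assume "j \<in> {Suc i..m}"
    hence "j - i = Suc (j - i - 1)" by auto
    hence "a ^ (j - i) = a * a ^ (j - i - 1)" by (metis power_Suc)
    thus "of_int (coeff p j) * a ^ (j - i) = a * (of_int (coeff p j) * a ^ (j - i - 1))" by simp
  qed
  also have "\<dots> = a * (\<Sum>j\<in>{Suc i..m}. of_int (coeff p j) * a ^ (j - i - 1))" by (simp add: sum_distrib_left)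
  finally have "of_int (coeff p i) = a * (- (\<Sum>j\<in>{Suc i..m}. of_int (coeff p j) * a ^ (j - i - 1)))"
    using eq by simp
  moreover have "- (\<Sum>j\<in>{Suc i..m}. of_int (coeff p j) * a ^ (j - i - 1)) \<in> R"
    by (intro Rneg Rsum Rmult Rint Rpow aR)
  ultimately show ?thesis using ci by blast
qed

lemma places_containing_finite:
  assumes aR: "a \<in> R" and a0: "a \<noteq> 0"
  shows "finite {P \<in> finite_places F. a \<in> P}"
proof -
  obtain c r where c: "c \<noteq> 0" "r \<in> R" "of_int c = a * r" using int_multiple[OF aR a0] by blast
  have sub: "{P \<in> finite_places F. a \<in> P} \<subseteq> (\<Union>q\<in>{q. prime q \<and> q dvd c}. {P \<in> finite_places F. of_int q \<in> P})"
  proof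
    fix P assume "P \<in> {P \<in> finite_places F. a \<in> P}"
    hence P: "P \<in> finite_places F" "a \<in> P" by auto
    have "a * r \<in> P" using ideal_multR[OF fp_ideal[OF P(1)] c(2) P(2)] .
    hence "of_int c \<in> P" using c(3) by simp
    then obtain q where "prime q" "q dvd c" "of_int q \<in> P" using prime_in_ideal[OF fp_prime[OF P(1)] c(1)] by blast
    thus "P \<in> (\<Union>q\<in>{q. prime q \<and> q dvd c}. {P \<in> finite_places F. of_int q \<in> P})" using P by blast
  qed
  have "{q. prime q \<and> q dvd c} \<subseteq> {-\<bar>c\<bar>..\<bar>c\<bar>}"
  proof
    fix q assume "q \<in> {q. prime q \<and> q dvd c}"
    hence "\<bar>q\<bar> \<le> \<bar>c\<bar>" using dvd_imp_le_int[OF c(1)] by blast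
    thus "q \<in> {-\<bar>c\<bar>..\<bar>c\<bar>}" by auto
  qed
  hence "finite {q. prime q \<and> q dvd c}" using finite_subset by blast
  hence "finite (\<Union>q\<in>{q. prime q \<and> q dvd c}. {P \<in> finite_places F. of_int q \<in> P})"
    using places_above_finite(1) by blast
  thus ?thesis using finite_subset[OF sub] by blast
qed

lemma frac_rep:
  assumes x: "x \<in> F"
  shows "\<exists>a b. a \<in> R \<and> b \<in> R \<and> b \<noteq> 0 \<and> x = a / b"
proof -
  have "\<And>i. i \<le> D \<Longrightarrow> x ^ i \<in> F" using Fpow[OF x] by blast
  then obtain c where c: "(\<Sum>i\<le>D. of_int (c i) * x ^ i) = 0" "\<exists>i\<le>D. c i \<noteq> 0"
    using dep_nonzero[of "\<lambda>i. x ^ i"] by blast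
  define k where "k = Max {i. i \<le> D \<and> c i \<noteq> 0}"
  have finK: "finite {i. i \<le> D \<and> c i \<noteq> 0}" by simp
  have kin: "k \<le> D" "c k \<noteq> 0" using Max_in[OF finK] c(2) unfolding k_def by auto
  have kmax: "c j = 0" if "k < j" "j \<le> D" for j
    using Max_ge[OF finK, of j] that unfolding k_def by fastforce
  define lc where "lc = c k"
  have sk: "(\<Sum>i\<le>k. of_int (c i) * x ^ i) = 0"
  proof -
    have "(\<Sum>i\<le>D. of_int (c i) * x ^ i) = (\<Sum>i\<le>k. of_int (c i) * x ^ i)"
      by (rule sum.mono_neutral_right) (use kin kmax in auto)
    thus ?thesis using c(1) by simp
  qed
  have k1: "k \<ge> 1"
  proof (rule ccontr)
    assume "\<not> k \<ge> 1"
    hence "k = 0" by simp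
    thus False using sk kin by simp
  qed
  have sk': "of_int lc * x ^ k + (\<Sum>i<k. of_int (c i) * x ^ i) = 0"
    using sk unfolding lc_def by (simp add: lessThan_Suc_atMost[symmetric] add.commute)
  define g :: "complex poly" where
    "g = monom 1 k + (\<Sum>i<k. monom (of_int (c i * lc ^ (k - 1 - i))) i)"
  have cg: "coeff g j = (if j = k then 1 else 0) + (\<Sum>i<k. if i = j then of_int (c i * lc ^ (k - 1 - i)) else 0)" for j
    unfolding g_def by (simp add: coeff_sum coeff_monom)
  have cgk: "coeff g k = 1" unfolding cg by simp
  have cgj: "coeff g j = 0" if "j > k" for j unfolding cg using that by (auto intro!: sum.neutral)
  have dg: "degree g = k"
  proof (rule antisym)
    show "degree g \<le> k" using cgj by (intro degree_le) auto
    show "k \<le> degree g" using cgk by (intro le_degree) simp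
  qed
  have "algebraic_int (of_int lc * x)"
  proof (rule algebraic_int.intros)
    show "lead_coeff g = 1" using dg cgk by simp
    show "\<forall>i. coeff g i \<in> \<int>"
    proof
      fix j show "coeff g j \<in> \<int>" unfolding cg
        by (intro Ints_add Ints_sum) auto
    qed
    have "poly g (of_int lc * x) = (of_int lc * x) ^ k + (\<Sum>i<k. of_int (c i * lc ^ (k - 1 - i)) * (of_int lc * x) ^ i)"
      unfolding g_def by (simp add: poly_sum poly_monom)
    also have "(\<Sum>i<k. of_int (c i * lc ^ (k - 1 - i)) * (of_int lc * x) ^ i) = (\<Sum>i<k. of_int lc ^ (k - 1) * (of_int (c i) * x ^ i))"
    proof (intro sum.cong refl)
      fix i assume "i \<in> {..<k}"
      hence "k - 1 - i + i = k - 1" by auto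
      hence "(of_int lc :: complex) ^ (k - 1 - i) * of_int lc ^ i = of_int lc ^ (k - 1)" by (metis power_add)
      thus "of_int (c i * lc ^ (k - 1 - i)) * (of_int lc * x) ^ i = of_int lc ^ (k - 1) * (of_int (c i) * x ^ i)"
        by (simp add: power_mult_distrib mult_ac)
    qed
    also have "(of_int lc * x) ^ k = of_int lc ^ (k - 1) * (of_int lc * x ^ k)"
    proof -
      have "k = Suc (k - 1)" using k1 by simp
      hence "(of_int lc :: complex) ^ k = of_int lc ^ (k - 1) * of_int lc" by (metis power_Suc2)
      thus ?thesis by (simp add: power_mult_distrib mult_ac)
    qed
    finally have "poly g (of_int lc * x) = of_int lc ^ (k - 1) * (of_int lc * x ^ k + (\<Sum>i<k. of_int (c i) * x ^ i))"
      by (simp add: sum_distrib_left distrib_left)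
    thus "poly g (of_int lc * x) = 0" using sk' by simp
  qed
  hence "of_int lc * x \<in> R" using R_iff Fmult[OF Fint x] by blast
  moreover have "of_int lc \<in> R" using Rint .
  moreover have "(of_int lc :: complex) \<noteq> 0" using kin unfolding lc_def by simp
  moreover have "x = (of_int lc * x) / of_int lc" using calculation(3) by simp
  ultimately show ?thesis by blast
qed

lemma sl_closed:
  assumes "\<And>z. z \<in> set l \<Longrightarrow> f z \<in> S" "0 \<in> S" "\<And>a b. a \<in> S \<Longrightarrow> b \<in> S \<Longrightarrow> a + b \<in> S"
  shows "sum_list (map f l) \<in> S"
  using assms by (induction l) auto

lemma IP_mem: "s \<in> ideal_pow R P (Suc k) \<longleftrightarrow> (\<exists>l. s = sum_list (map (\<lambda>(a, b). a * b) l) \<and> set l \<subseteq> P \<times> ideal_pow R P k)"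
  by simp

lemma IP_R: "is_ideal R P \<Longrightarrow> ideal_pow R P k \<subseteq> R"
proof (induction k)
  case 0 thus ?case by simp
next
  case (Suc k)
  show ?case
  proof
    fix s assume "s \<in> ideal_pow R P (Suc k)"
    then obtain l where l: "s = sum_list (map (\<lambda>(a, b). a * b) l)" "set l \<subseteq> P \<times> ideal_pow R P k"
      unfolding IP_mem by blast
    have "sum_list (map (\<lambda>(a, b). a * b) l) \<in> R"
    proof (rule sl_closed[OF _ R0 Radd])
      fix z assume "z \<in> set l"
      hence "z \<in> P \<times> ideal_pow R P k" using l(2) by blast
      hence "fst z \<in> P" "snd z \<in> ideal_pow R P k" by (auto simp: mem_Times_iff)
      hence "fst z \<in> R" "snd z \<in> R" using ideal_R[OF Suc.prems] Suc.IH[OF Suc.prems] by auto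
      thus "(\<lambda>(a, b). a * b) z \<in> R" using Rmult by (simp add: case_prod_beta)
    qed
    thus "s \<in> R" using l by simp
  qed
qed

lemma IP_add: "is_ideal R P \<Longrightarrow> s \<in> ideal_pow R P k \<Longrightarrow> t \<in> ideal_pow R P k \<Longrightarrow> s + t \<in> ideal_pow R P k"
proof (cases k)
  case 0 thus "s \<in> ideal_pow R P k \<Longrightarrow> t \<in> ideal_pow R P k \<Longrightarrow> s + t \<in> ideal_pow R P k" using Radd by simp
next
  case (Suc k')
  assume I: "is_ideal R P" and st: "s \<in> ideal_pow R P k" "t \<in> ideal_pow R P k"
  obtain l1 where l1: "s = sum_list (map (\<lambda>(a, b). a * b) l1)" "set l1 \<subseteq> P \<times> ideal_pow R P k'"
    using st(1) unfolding Suc IP_mem by blast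
  obtain l2 where l2: "t = sum_list (map (\<lambda>(a, b). a * b) l2)" "set l2 \<subseteq> P \<times> ideal_pow R P k'"
    using st(2) unfolding Suc IP_mem by blast
  have "s + t = sum_list (map (\<lambda>(a, b). a * b) (l1 @ l2))" using l1 l2 by simp
  moreover have "set (l1 @ l2) \<subseteq> P \<times> ideal_pow R P k'" using l1 l2 by simp
  ultimately show ?thesis unfolding Suc IP_mem by blast
qed

lemma IP_mult: "is_ideal R P \<Longrightarrow> r \<in> R \<Longrightarrow> s \<in> ideal_pow R P k \<Longrightarrow> r * s \<in> ideal_pow R P k"
proof (cases k)
  case 0 thus "r \<in> R \<Longrightarrow> s \<in> ideal_pow R P k \<Longrightarrow> r * s \<in> ideal_pow R P k" using Rmult by simp
next
  case (Suc k')
  assume I: "is_ideal R P" and r: "r \<in> R" and s: "s \<in> ideal_pow R P k"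
  obtain l where l: "s = sum_list (map (\<lambda>(a, b). a * b) l)" "set l \<subseteq> P \<times> ideal_pow R P k'"
    using s unfolding Suc IP_mem by blast
  define l' where "l' = map (\<lambda>(a, b). (r * a, b)) l"
  have gen: "r * sum_list (map (\<lambda>(a, b). a * b) ll) = sum_list (map (\<lambda>(a, b). a * b) (map (\<lambda>(a, b). (r * a, b)) ll))" for ll :: "(complex \<times> complex) list"
    by (induction ll) (auto simp: algebra_simps)
  have e: "r * s = sum_list (map (\<lambda>(a, b). a * b) l')" unfolding l'_def l(1) by (rule gen)
  have "set l' \<subseteq> P \<times> ideal_pow R P k'"
  proof
    fix z assume "z \<in> set l'"
    then obtain a b where "(a, b) \<in> set l" "z = (r * a, b)" unfolding l'_def by auto
    thus "z \<in> P \<times> ideal_pow R P k'" using l(2) ideal_multL[OF I r] by auto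
  qed
  thus ?thesis using e unfolding Suc IP_mem by blast
qed

lemma IP_pow: "is_ideal R P \<Longrightarrow> \<pi> \<in> P \<Longrightarrow> \<pi> ^ k \<in> ideal_pow R P k"
proof (induction k)
  case 0 thus ?case using R1 by simp
next
  case (Suc k)
  have "\<pi> ^ Suc k = sum_list (map (\<lambda>(a, b). a * b) [(\<pi>, \<pi> ^ k)])" by simp
  moreover have "set [(\<pi>, \<pi> ^ k)] \<subseteq> P \<times> ideal_pow R P k" using Suc by simp
  ultimately show ?case unfolding IP_mem by blast
qed

lemma IP_cancel:
  assumes P: "P \<in> finite_places F" and u: "u \<in> R" "u \<notin> P" and z: "z \<in> R"
    and uz: "u * z \<in> ideal_pow R P k"
  shows "z \<in> ideal_pow R P k"
proof -
  have I: "is_ideal R P" using fp_ideal[OF P] .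
  obtain w where w: "w \<in> R" "u * w - 1 \<in> P" using fp_inverse[OF P u] by blast
  define \<pi> where "\<pi> = u * w - 1"
  define w' where "w' = w * (\<Sum>i<k. (- \<pi>) ^ i)"
  have \<pi>R: "\<pi> \<in> R" using w(2) ideal_R[OF I] unfolding \<pi>_def by blast
  have w'R: "w' \<in> R" unfolding w'_def by (intro Rmult w(1) Rsum Rpow Rneg \<pi>R)
  have "1 - (- \<pi>) ^ k = (1 - (- \<pi>)) * (\<Sum>i<k. (- \<pi>) ^ i)" by (rule one_diff_power_eq)
  hence uw': "u * w' = 1 - (- \<pi>) ^ k" unfolding w'_def \<pi>_def by (simp add: mult.assoc)
  have "z = w' * (u * z) + (- \<pi>) ^ k * z"
  proof -
    have "w' * (u * z) = (1 - (- \<pi>) ^ k) * z" using uw' by (simp add: mult_ac)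
    thus ?thesis by (simp add: algebra_simps)
  qed
  moreover have "w' * (u * z) \<in> ideal_pow R P k" using IP_mult[OF I w'R uz] .
  moreover have "(- \<pi>) ^ k * z \<in> ideal_pow R P k"
  proof -
    have "- \<pi> \<in> P" using ideal_neg[OF I w(2)] unfolding \<pi>_def .
    hence "(- \<pi>) ^ k \<in> ideal_pow R P k" using IP_pow[OF I] by blast
    hence "z * (- \<pi>) ^ k \<in> ideal_pow R P k" using IP_mult[OF I z] by blast
    thus ?thesis by (simp add: mult.commute)
  qed
  ultimately show ?thesis using IP_add[OF I] by metis
qed

lemma ord_v_zero:
  assumes P: "P \<in> finite_places F" and ab: "a \<in> R" "b \<in> R" "a \<notin> P" "b \<notin> P" "a \<noteq> 0" "b \<noteq> 0"
    and x: "x = a / b"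
  shows "ord_v F P x = 0"
proof -
  define Pr where "Pr k \<longleftrightarrow> (\<exists>a'\<in>R - {0}. \<exists>b'\<in>R - {0}. x = a' / b' \<and> k = int (ord_int F P a') - int (ord_int F P b'))" for k
  have "Pr (int (ord_int F P a) - int (ord_int F P b))" unfolding Pr_def using ab x by blast
  hence "Pr (ord_v F P x)" unfolding ord_v_def Pr_def[symmetric] by (rule someI)
  then obtain a' b' where a': "a' \<in> R" "a' \<noteq> 0" and b': "b' \<in> R" "b' \<noteq> 0"
    and x': "x = a' / b'" and k: "ord_v F P x = int (ord_int F P a') - int (ord_int F P b')"
    unfolding Pr_def by blast
  have cross: "b * a' = a * b'" using x x' ab(6) b'(2) by (simp add: field_simps)
  have "(\<lambda>k. a' \<in> ideal_pow R P k) = (\<lambda>k. b' \<in> ideal_pow R P k)"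
  proof (rule ext, rule iffI)
    fix k assume "a' \<in> ideal_pow R P k"
    hence "b * a' \<in> ideal_pow R P k" using IP_mult[OF fp_ideal[OF P] ab(2)] by blast
    hence "a * b' \<in> ideal_pow R P k" using cross by simp
    thus "b' \<in> ideal_pow R P k" using IP_cancel[OF P ab(1) ab(3) b'(1)] by blast
  next
    fix k assume "b' \<in> ideal_pow R P k"
    hence "a * b' \<in> ideal_pow R P k" using IP_mult[OF fp_ideal[OF P] ab(1)] by blast
    hence "b * a' \<in> ideal_pow R P k" using cross by simp
    thus "a' \<in> ideal_pow R P k" using IP_cancel[OF P ab(2) ab(4) a'(1)] by blast
  qed
  hence "ord_int F P a' = ord_int F P b'" unfolding ord_int_def by simp
  thus ?thesis using k by simp
qed

lemma ord_v_support:
  assumes x: "x \<in> F" "x \<noteq> 0"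
  shows "finite {P \<in> finite_places F. ord_v F P x \<noteq> 0}"
proof -
  obtain a b where ab: "a \<in> R" "b \<in> R" "b \<noteq> 0" "x = a / b" using frac_rep[OF x(1)] by blast
  have a0: "a \<noteq> 0" using ab x(2) by auto
  have "{P \<in> finite_places F. ord_v F P x \<noteq> 0} \<subseteq> {P \<in> finite_places F. a \<in> P} \<union> {P \<in> finite_places F. b \<in> P}"
    using ord_v_zero[OF _ ab(1,2) _ _ a0 ab(3,4)] by blast
  thus ?thesis using places_containing_finite[OF ab(1) a0] places_containing_finite[OF ab(2,3)]
    by (meson finite_UnI finite_subset)
qed

end

definition isrep :: "nat \<Rightarrow> ('r \<Rightarrow> nat \<Rightarrow> int) \<Rightarrow> 'r set set \<Rightarrow> (nat \<Rightarrow> real) \<Rightarrow> ('r \<Rightarrow> real) \<Rightarrow> 'r set \<Rightarrow> bool" where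
  "isrep d b Fan y a \<sigma> \<longleftrightarrow> \<sigma> \<in> Fan \<and> (\<forall>\<rho>'. \<rho>' \<notin> \<sigma> \<longrightarrow> a \<rho>' = 0) \<and> (\<forall>\<rho>'\<in>\<sigma>. a \<rho>' \<ge> 0) \<and>
       (\<forall>j<d. y j = (\<Sum>\<rho>'\<in>\<sigma>. a \<rho>' * real_of_int (b \<rho>' j)))"

locale fan =
  fixes d l :: nat and n :: "nat \<Rightarrow> nat" and Rays :: "'r set" and b :: "'r \<Rightarrow> nat \<Rightarrow> int" and Fan :: "'r set set"
  assumes ssf: "simplicial_stacky_fan d l n Rays b Fan"
begin

lemma n_pos: "i < l \<Longrightarrow> n i > 0" using ssf[unfolded simplicial_stacky_fan_def, THEN conjunct1] by blast
lemma finRays: "finite Rays" using ssf[unfolded simplicial_stacky_fan_def, THEN conjunct2, THEN conjunct1] .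
lemma b_hi: "\<rho> \<in> Rays \<Longrightarrow> j \<ge> d \<Longrightarrow> b \<rho> j = 0" using ssf[unfolded simplicial_stacky_fan_def, THEN conjunct2, THEN conjunct2, THEN conjunct2, THEN conjunct1] by blast
lemma Fan_sub: "\<sigma> \<in> Fan \<Longrightarrow> \<sigma> \<subseteq> Rays" using ssf[unfolded simplicial_stacky_fan_def, THEN conjunct2, THEN conjunct2, THEN conjunct2, THEN conjunct2, THEN conjunct1] by blast
lemma Fan_down: "\<sigma> \<in> Fan \<Longrightarrow> \<tau> \<subseteq> \<sigma> \<Longrightarrow> \<tau> \<in> Fan" using ssf[unfolded simplicial_stacky_fan_def, THEN conjunct2, THEN conjunct2, THEN conjunct2, THEN conjunct2, THEN conjunct2, THEN conjunct2, THEN conjunct1] by blast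
lemma Fan_indep: "\<sigma> \<in> Fan \<Longrightarrow> (\<forall>j<d. (\<Sum>\<rho>\<in>\<sigma>. c \<rho> * real_of_int (b \<rho> j)) = 0) \<Longrightarrow> \<rho> \<in> \<sigma> \<Longrightarrow> c \<rho> = 0"
  using ssf[unfolded simplicial_stacky_fan_def, THEN conjunct2, THEN conjunct2, THEN conjunct2, THEN conjunct2, THEN conjunct2, THEN conjunct2, THEN conjunct2, THEN conjunct1] by blast
lemma Fan_int: "\<sigma> \<in> Fan \<Longrightarrow> \<tau> \<in> Fan \<Longrightarrow> cone_span d b \<sigma> \<inter> cone_span d b \<tau> = cone_span d b (\<sigma> \<inter> \<tau>)"
  using ssf[unfolded simplicial_stacky_fan_def, THEN conjunct2, THEN conjunct2, THEN conjunct2, THEN conjunct2, THEN conjunct2, THEN conjunct2, THEN conjunct2, THEN conjunct2, THEN conjunct1] by blast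
lemma Fan_cover: "\<exists>\<sigma>\<in>Fan. y \<in> cone_span d b \<sigma>" using ssf[unfolded simplicial_stacky_fan_def, THEN conjunct2, THEN conjunct2, THEN conjunct2, THEN conjunct2, THEN conjunct2, THEN conjunct2, THEN conjunct2, THEN conjunct2, THEN conjunct2] by blast
lemma Fan_fin: "\<sigma> \<in> Fan \<Longrightarrow> finite \<sigma>" using Fan_sub finRays finite_subset by blast

lemma rep_exists: "\<exists>a \<sigma>. isrep d b Fan y a \<sigma>"
proof -
  obtain \<sigma> where \<sigma>: "\<sigma> \<in> Fan" "y \<in> cone_span d b \<sigma>" using Fan_cover by blast
  then obtain a where a: "\<forall>\<rho>\<in>\<sigma>. a \<rho> \<ge> 0" "\<forall>j<d. y j = (\<Sum>\<rho>\<in>\<sigma>. a \<rho> * real_of_int (b \<rho> j))"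
    unfolding cone_span_def by blast
  define a' where "a' \<rho> = (if \<rho> \<in> \<sigma> then a \<rho> else 0)" for \<rho>
  have "isrep d b Fan y a' \<sigma>" unfolding isrep_def
  proof (intro conjI allI impI ballI)
    show "\<sigma> \<in> Fan" using \<sigma>(1) .
  next
    fix \<rho> assume "\<rho> \<notin> \<sigma>" thus "a' \<rho> = 0" unfolding a'_def by simp
  next
    fix \<rho> assume "\<rho> \<in> \<sigma>" thus "a' \<rho> \<ge> 0" unfolding a'_def using a(1) by simp
  next
    fix j assume "j < d"
    thus "y j = (\<Sum>\<rho>\<in>\<sigma>. a' \<rho> * real_of_int (b \<rho> j))" using a(2) unfolding a'_def by simp
  qed
  thus ?thesis by blast
qed

lemma rep_cone: "isrep d b Fan y a \<sigma> \<Longrightarrow> y \<in> cone_span d b \<sigma>"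
  unfolding cone_span_def mem_Collect_eq by (rule exI[of _ a]) (simp add: isrep_def)

lemma rep_eq_cone:
  assumes r: "isrep d b Fan y a \<sigma>" and \<tau>: "\<tau> \<subseteq> \<sigma>" and c: "\<forall>\<rho>\<in>\<tau>. c \<rho> \<ge> 0" "\<forall>j<d. y j = (\<Sum>\<rho>\<in>\<tau>. c \<rho> * real_of_int (b \<rho> j))"
  shows "a = (\<lambda>\<rho>. if \<rho> \<in> \<tau> then c \<rho> else 0)"
proof
  fix \<rho>
  define c' where "c' \<rho> = (if \<rho> \<in> \<tau> then c \<rho> else 0)" for \<rho>
  have \<sigma>: "\<sigma> \<in> Fan" using r unfolding isrep_def by blast
  have fin: "finite \<sigma>" using Fan_fin[OF \<sigma>] .
  have "\<forall>j<d. (\<Sum>\<rho>\<in>\<sigma>. (a \<rho> - c' \<rho>) * real_of_int (b \<rho> j)) = 0"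
  proof (intro allI impI)
    fix j assume j: "j < d"
    have "(\<Sum>\<rho>\<in>\<sigma>. c' \<rho> * real_of_int (b \<rho> j)) = (\<Sum>\<rho>\<in>\<tau>. c' \<rho> * real_of_int (b \<rho> j))"
      by (rule sum.mono_neutral_right[OF fin \<tau>]) (auto simp: c'_def)
    also have "\<dots> = (\<Sum>\<rho>\<in>\<tau>. c \<rho> * real_of_int (b \<rho> j))"
      by (intro sum.cong refl) (simp add: c'_def)
    finally have "(\<Sum>\<rho>\<in>\<sigma>. c' \<rho> * real_of_int (b \<rho> j)) = (\<Sum>\<rho>\<in>\<tau>. c \<rho> * real_of_int (b \<rho> j))" .
    hence "(\<Sum>\<rho>\<in>\<sigma>. c' \<rho> * real_of_int (b \<rho> j)) = y j" using c(2) j by simp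
    moreover have "(\<Sum>\<rho>\<in>\<sigma>. a \<rho> * real_of_int (b \<rho> j)) = y j" using r j unfolding isrep_def by simp
    ultimately show "(\<Sum>\<rho>\<in>\<sigma>. (a \<rho> - c' \<rho>) * real_of_int (b \<rho> j)) = 0"
      by (simp add: left_diff_distrib sum_subtractf)
  qed
  hence "\<forall>\<rho>\<in>\<sigma>. a \<rho> - c' \<rho> = 0" using Fan_indep[OF \<sigma>, of "\<lambda>\<rho>. a \<rho> - c' \<rho>"] by blast
  moreover have "\<rho> \<notin> \<sigma> \<Longrightarrow> a \<rho> = 0 \<and> c' \<rho> = 0" using r \<tau> unfolding isrep_def c'_def by auto
  ultimately have "a \<rho> = c' \<rho>" by (cases "\<rho> \<in> \<sigma>") auto
  thus "a \<rho> = (if \<rho> \<in> \<tau> then c \<rho> else 0)" unfolding c'_def .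
qed

lemma rep_unique:
  assumes r1: "isrep d b Fan y a \<sigma>" and r2: "isrep d b Fan y a' \<sigma>'"
  shows "a = a'"
proof -
  have \<sigma>: "\<sigma> \<in> Fan" "\<sigma>' \<in> Fan" using r1 r2 unfolding isrep_def by blast+
  have "y \<in> cone_span d b (\<sigma> \<inter> \<sigma>')" using Fan_int[OF \<sigma>] rep_cone[OF r1] rep_cone[OF r2] by blast
  then obtain c where c: "\<forall>\<rho>\<in>\<sigma> \<inter> \<sigma>'. c \<rho> \<ge> 0" "\<forall>j<d. y j = (\<Sum>\<rho>\<in>\<sigma> \<inter> \<sigma>'. c \<rho> * real_of_int (b \<rho> j))"
    unfolding cone_span_def by blast
  have "a = (\<lambda>\<rho>. if \<rho> \<in> \<sigma> \<inter> \<sigma>' then c \<rho> else 0)" by (rule rep_eq_cone[OF r1 _ c]) blast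
  moreover have "a' = (\<lambda>\<rho>. if \<rho> \<in> \<sigma> \<inter> \<sigma>' then c \<rho> else 0)" by (rule rep_eq_cone[OF r2 _ c]) blast
  ultimately show ?thesis by simp
qed

definition cf :: "(nat \<Rightarrow> real) \<Rightarrow> 'r \<Rightarrow> real" where
  "cf y = (SOME a. \<exists>\<sigma>\<in>Fan. (\<forall>\<rho>'. \<rho>' \<notin> \<sigma> \<longrightarrow> a \<rho>' = 0) \<and> (\<forall>\<rho>'\<in>\<sigma>. a \<rho>' \<ge> 0) \<and>
       (\<forall>j<d. y j = (\<Sum>\<rho>'\<in>\<sigma>. a \<rho>' * real_of_int (b \<rho>' j))))"

lemma coord_cf: "coord d b Fan \<rho> y = cf y \<rho>" unfolding coord_def cf_def by simp

lemma cf_alt: "cf y = (SOME a. \<exists>\<sigma>. isrep d b Fan y a \<sigma>)"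
  unfolding cf_def isrep_def by (simp add: Bex_def conj_assoc)

lemma cf_rep: "\<exists>\<sigma>. isrep d b Fan y (cf y) \<sigma>"
  unfolding cf_alt using someI_ex[OF rep_exists] .

lemma cf_eq: "isrep d b Fan y a \<sigma> \<Longrightarrow> cf y = a"
  using cf_rep rep_unique by blast

lemma cf_nonneg: "cf y \<rho> \<ge> 0"
proof -
  obtain \<sigma> where "isrep d b Fan y (cf y) \<sigma>" using cf_rep by blast
  thus ?thesis unfolding isrep_def by (cases "\<rho> \<in> \<sigma>") auto
qed

lemma cf_out: "\<rho> \<notin> Rays \<Longrightarrow> cf y \<rho> = 0"
proof -
  assume "\<rho> \<notin> Rays"
  obtain \<sigma> where "isrep d b Fan y (cf y) \<sigma>" using cf_rep by blast
  thus ?thesis using Fan_sub \<open>\<rho> \<notin> Rays\<close> unfolding isrep_def by blast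
qed

lemma cf_sum: "j < d \<Longrightarrow> y j = (\<Sum>\<rho>\<in>Rays. cf y \<rho> * real_of_int (b \<rho> j))"
proof -
  assume j: "j < d"
  obtain \<sigma> where r: "isrep d b Fan y (cf y) \<sigma>" using cf_rep by blast
  hence \<sigma>: "\<sigma> \<in> Fan" unfolding isrep_def by blast
  have "y j = (\<Sum>\<rho>\<in>\<sigma>. cf y \<rho> * real_of_int (b \<rho> j))" using r j unfolding isrep_def by blast
  also have "\<dots> = (\<Sum>\<rho>\<in>Rays. cf y \<rho> * real_of_int (b \<rho> j))"
    by (rule sum.mono_neutral_left[OF finRays Fan_sub[OF \<sigma>]]) (use r in \<open>auto simp: isrep_def\<close>)
  finally show ?thesis .
qed

lemma cf_zero: "cf (\<lambda>j. 0) = (\<lambda>\<rho>. 0)"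
proof -
  obtain \<sigma> where "\<sigma> \<in> Fan" using Fan_cover by blast
  hence "{} \<in> Fan" using Fan_down by blast
  hence "isrep d b Fan (\<lambda>j. 0) (\<lambda>\<rho>. 0) {}" unfolding isrep_def by auto
  thus ?thesis using cf_eq by blast
qed

lemma cf_frac:
  assumes z: "\<And>j. j < d \<Longrightarrow> z j = (\<Sum>\<rho>\<in>Rays. frac (cf y \<rho>) * real_of_int (b \<rho> j))"
  shows "cf z = (\<lambda>\<rho>. frac (cf y \<rho>))"
proof -
  obtain \<sigma> where r: "isrep d b Fan y (cf y) \<sigma>" using cf_rep by blast
  hence \<sigma>: "\<sigma> \<in> Fan" unfolding isrep_def by blast
  have "isrep d b Fan z (\<lambda>\<rho>. frac (cf y \<rho>)) \<sigma>"
    unfolding isrep_def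
  proof (intro conjI allI impI ballI)
    show "\<sigma> \<in> Fan" using \<sigma> .
    fix \<rho> assume "\<rho> \<notin> \<sigma>" thus "frac (cf y \<rho>) = 0" using r unfolding isrep_def by simp
  next
    fix \<rho> show "frac (cf y \<rho>) \<ge> 0" by simp
  next
    fix j assume j: "j < d"
    have "z j = (\<Sum>\<rho>\<in>Rays. frac (cf y \<rho>) * real_of_int (b \<rho> j))" using z[OF j] .
    also have "\<dots> = (\<Sum>\<rho>\<in>\<sigma>. frac (cf y \<rho>) * real_of_int (b \<rho> j))"
      by (rule sum.mono_neutral_right[OF finRays Fan_sub[OF \<sigma>]]) (use r in \<open>auto simp: isrep_def\<close>)
    finally show "z j = (\<Sum>\<rho>\<in>\<sigma>. frac (cf y \<rho>) * real_of_int (b \<rho> j))" .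
  qed
  thus ?thesis using cf_eq by blast
qed

end

abbreviation zeroN :: "Nelt" where "zeroN \<equiv> ((\<lambda>j. 0), (\<lambda>i. 0))"
abbreviation zeroY :: "Yelt" where "zeroY \<equiv> ((\<lambda>j. 0), (\<lambda>i. 0))"

locale fant = fan d l n Rays b Fan
  for d l :: nat and n :: "nat \<Rightarrow> nat" and Rays :: "'r set" and b :: "'r \<Rightarrow> nat \<Rightarrow> int" and Fan :: "'r set set" +
  fixes t :: "'r + Yelt \<Rightarrow> real"
  assumes tL: "t \<in> Lambda_open d l n Rays b Fan"
begin

abbreviation "NS \<equiv> Nset d l n"
abbreviation "qm \<equiv> qmap d Rays b Fan"
definition "Q = qm ` NS"
definition "NN = (\<Sum>i<l. n i)"
definition "Bd = (\<Sum>\<rho>\<in>Rays. \<Sum>j<d. \<bar>b \<rho> j\<bar>)"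
definition "Zbox = {z. \<forall>j. (j \<in> {..<d} \<longrightarrow> z j \<in> real_of_int ` {-Bd..Bd}) \<and> (j \<notin> {..<d} \<longrightarrow> z j = 0)}"
definition "Gbox = {g. \<forall>i. (i \<in> {..<l} \<longrightarrow> g i \<in> {0..<int NN}) \<and> (i \<notin> {..<l} \<longrightarrow> g i = 0)}"

lemma tRays: "\<rho> \<in> Rays \<Longrightarrow> t (Inl \<rho>) > 0" using tL unfolding Lambda_open_def by blast
lemma tLam: "Y \<in> pi0_star d l n Rays b Fan \<Longrightarrow> t (Inr Y) + (\<Sum>\<rho>\<in>Rays. coord d b Fan \<rho> (fst Y) * t (Inl \<rho>)) > 0"
  using tL unfolding Lambda_open_def by blast

lemma qm_fst: "fst (qm m) = (\<lambda>j. \<Sum>\<rho>\<in>Rays. frac (cf (rig_real (fst m)) \<rho>) * real_of_int (b \<rho> j))"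
  unfolding qmap_def coord_cf by simp
lemma qm_snd: "snd (qm m) = snd m" unfolding qmap_def by simp

lemma NS_mem: "m \<in> NS \<longleftrightarrow> (\<forall>j\<ge>d. fst m j = 0) \<and> (\<forall>i<l. 0 \<le> snd m i \<and> snd m i < int (n i)) \<and> (\<forall>i\<ge>l. snd m i = 0)"
  unfolding Nset_def by (cases m) auto

lemma Gbox_fin: "finite Gbox" unfolding Gbox_def by (rule finite_set_of_finite_funs) auto
lemma Zbox_fin: "finite Zbox" unfolding Zbox_def by (rule finite_set_of_finite_funs) auto

lemma snd_NS: "m \<in> NS \<Longrightarrow> snd m \<in> Gbox"
proof -
  assume m: "m \<in> NS"
  have "n i \<le> NN" if "i < l" for i unfolding NN_def using that by (intro member_le_sum) auto
  thus ?thesis using m unfolding NS_mem Gbox_def by force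
qed

lemma abs_b_le: "\<rho> \<in> Rays \<Longrightarrow> j < d \<Longrightarrow> \<bar>b \<rho> j\<bar> \<le> Bd"
proof -
  assume r: "\<rho> \<in> Rays" and j: "j < d"
  have "\<bar>b \<rho> j\<bar> \<le> (\<Sum>j<d. \<bar>b \<rho> j\<bar>)" using j by (intro member_le_sum) auto
  also have "\<dots> \<le> Bd" unfolding Bd_def using r finRays by (intro member_le_sum) auto
  finally show ?thesis .
qed

lemma fst_qm_Zbox:
  assumes m: "m \<in> NS"
  shows "fst (qm m) \<in> Zbox"
proof -
  define y where "y = rig_real (fst m)"
  have "fst (qm m) j \<in> real_of_int ` {-Bd..Bd}" if j: "j < d" for j
  proof -
    have yj: "y j = (\<Sum>\<rho>\<in>Rays. cf y \<rho> * real_of_int (b \<rho> j))" using cf_sum[OF j] .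
    define z0 where "z0 = fst m j - (\<Sum>\<rho>\<in>Rays. \<lfloor>cf y \<rho>\<rfloor> * b \<rho> j)"
    have "fst (qm m) j = (\<Sum>\<rho>\<in>Rays. (cf y \<rho> - of_int \<lfloor>cf y \<rho>\<rfloor>) * real_of_int (b \<rho> j))"
      unfolding qm_fst y_def[symmetric] by (simp add: frac_def)
    also have "\<dots> = y j - (\<Sum>\<rho>\<in>Rays. of_int \<lfloor>cf y \<rho>\<rfloor> * real_of_int (b \<rho> j))"
      unfolding yj by (simp add: left_diff_distrib sum_subtractf)
    also have "\<dots> = of_int z0" unfolding z0_def y_def rig_real_def by simp
    finally have e: "fst (qm m) j = of_int z0" .
    have "\<bar>fst (qm m) j\<bar> \<le> (\<Sum>\<rho>\<in>Rays. \<bar>frac (cf y \<rho>) * real_of_int (b \<rho> j)\<bar>)"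
      unfolding qm_fst y_def by (rule sum_abs)
    also have "\<dots> \<le> (\<Sum>\<rho>\<in>Rays. real_of_int \<bar>b \<rho> j\<bar>)"
    proof (rule sum_mono)
      fix \<rho> assume "\<rho> \<in> Rays"
      have "\<bar>frac (cf y \<rho>)\<bar> \<le> 1" using frac_lt_1[of "cf y \<rho>"] frac_ge_0[of "cf y \<rho>"] by simp
      hence "\<bar>frac (cf y \<rho>)\<bar> * \<bar>real_of_int (b \<rho> j)\<bar> \<le> 1 * \<bar>real_of_int (b \<rho> j)\<bar>" by (intro mult_right_mono) auto
      thus "\<bar>frac (cf y \<rho>) * real_of_int (b \<rho> j)\<bar> \<le> real_of_int \<bar>b \<rho> j\<bar>" by (simp add: abs_mult)
    qed
    also have "\<dots> \<le> real_of_int Bd"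
    proof -
      have "(\<Sum>\<rho>\<in>Rays. \<bar>b \<rho> j\<bar>) \<le> Bd" unfolding Bd_def
        by (intro sum_mono member_le_sum) (use j in auto)
      thus ?thesis by (metis of_int_le_iff of_int_sum)
    qed
    finally have "\<bar>z0\<bar> \<le> Bd" using e by simp
    hence "z0 \<in> {-Bd..Bd}" by auto
    thus ?thesis using e by simp
  qed
  moreover have "fst (qm m) j = 0" if "j \<ge> d" for j
    unfolding qm_fst using b_hi that by simp
  ultimately show ?thesis unfolding Zbox_def by auto
qed

lemma Q_fin: "finite Q"
proof -
  have "Q \<subseteq> Zbox \<times> Gbox"
  proof
    fix Y assume "Y \<in> Q"
    then obtain m where m: "m \<in> NS" "Y = qm m" unfolding Q_def by blast
    have "fst Y \<in> Zbox" using fst_qm_Zbox[OF m(1)] m(2) by simp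
    moreover have "snd Y \<in> Gbox" using snd_NS[OF m(1)] qm_snd[of m] m(2) by simp
    ultimately show "Y \<in> Zbox \<times> Gbox" by (simp add: mem_Times_iff)
  qed
  thus ?thesis using Zbox_fin Gbox_fin finite_subset by blast
qed

definition "Lam Y = t (Inr Y) + (\<Sum>\<rho>\<in>Rays. coord d b Fan \<rho> (fst Y) * t (Inl \<rho>))"
definition "tau = Min (insert 1 ((\<lambda>\<rho>. t (Inl \<rho>)) ` Rays))"
definition "delta1 = Min (insert 1 (Lam ` (Q - {zeroY})))"
definition "delta = min tau delta1"
definition "C0 = (\<Sum>Y\<in>Q. \<bar>t (Inr Y)\<bar>)"
definition "Acst = 1 + real_of_int Bd"
definition "kappa = tau / (real (d + 1) * Acst)"

lemma tau_pos: "tau > 0" unfolding tau_def using finRays tRays by (subst Min_gr_iff) auto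
lemma tau_le: "\<rho> \<in> Rays \<Longrightarrow> tau \<le> t (Inl \<rho>)" unfolding tau_def using finRays by (intro Min_le) auto
lemma delta1_pos: "delta1 > 0"
proof -
  have "\<forall>Y\<in>Q - {zeroY}. Lam Y > 0"
  proof
    fix Y assume "Y \<in> Q - {zeroY}"
    hence "Y \<in> pi0_star d l n Rays b Fan" unfolding pi0_star_def Q_def by blast
    thus "Lam Y > 0" using tLam unfolding Lam_def by blast
  qed
  thus ?thesis unfolding delta1_def using Q_fin by (subst Min_gr_iff) auto
qed
lemma delta1_le: "Y \<in> Q \<Longrightarrow> Y \<noteq> zeroY \<Longrightarrow> delta1 \<le> Lam Y" unfolding delta1_def using Q_fin by (intro Min_le) auto
lemma delta_pos: "delta > 0" unfolding delta_def using tau_pos delta1_pos by simp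
lemma C0_ge: "Y \<in> Q \<Longrightarrow> \<bar>t (Inr Y)\<bar> \<le> C0" unfolding C0_def using Q_fin by (intro member_le_sum) auto
lemma C0_nonneg: "C0 \<ge> 0" unfolding C0_def by (intro sum_nonneg) auto
lemma Bd_nonneg: "Bd \<ge> 0" unfolding Bd_def by (intro sum_nonneg) auto
lemma Acst_pos: "Acst \<ge> 1" unfolding Acst_def using Bd_nonneg by simp
lemma kappa_pos: "kappa > 0" unfolding kappa_def using tau_pos Acst_pos by simp

lemma phi_expr: "phi d Rays b Fan t m = (if qm m \<noteq> zeroY then t (Inr (qm m)) else 0) + (\<Sum>\<rho>\<in>Rays. cf (rig_real (fst m)) \<rho> * t (Inl \<rho>))"
  unfolding phi_def coord_cf by simp

lemma cf_int_zero: "cf (rig_real (\<lambda>j. 0)) = (\<lambda>\<rho>. 0)"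
  using cf_zero unfolding rig_real_def by simp

lemma phi_zero: "phi d Rays b Fan t zeroN = 0"
proof -
  have "qm zeroN = zeroY" unfolding qmap_def coord_cf by (simp add: cf_int_zero)
  thus ?thesis unfolding phi_expr by (simp add: cf_int_zero)
qed

lemma sum_cf_t_ge: "(\<Sum>\<rho>\<in>Rays. cf y \<rho> * t (Inl \<rho>)) \<ge> tau * (\<Sum>\<rho>\<in>Rays. cf y \<rho>)"
proof -
  have "tau * (\<Sum>\<rho>\<in>Rays. cf y \<rho>) = (\<Sum>\<rho>\<in>Rays. cf y \<rho> * tau)" by (simp add: sum_distrib_left mult_ac)
  also have "\<dots> \<le> (\<Sum>\<rho>\<in>Rays. cf y \<rho> * t (Inl \<rho>))"
    by (intro sum_mono mult_left_mono tau_le cf_nonneg)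
  finally show ?thesis .
qed

lemma phi_lower:
  assumes m: "m \<in> NS"
  shows "phi d Rays b Fan t m \<ge> tau * (\<Sum>\<rho>\<in>Rays. cf (rig_real (fst m)) \<rho>) - C0"
proof -
  have "(if qm m \<noteq> zeroY then t (Inr (qm m)) else 0) \<ge> - C0"
    using C0_ge[of "qm m"] m C0_nonneg unfolding Q_def by auto
  thus ?thesis unfolding phi_expr using sum_cf_t_ge[of "rig_real (fst m)"] by linarith
qed

lemma phi_pos:
  assumes m: "m \<in> NS" "m \<noteq> zeroN"
  shows "phi d Rays b Fan t m \<ge> delta"
proof -
  define y where "y = rig_real (fst m)"
  define a where "a = cf y"
  have qf: "fst (qm m) = (\<lambda>j. \<Sum>\<rho>\<in>Rays. frac (a \<rho>) * real_of_int (b \<rho> j))" unfolding qm_fst a_def y_def ..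
  have cfq: "cf (fst (qm m)) = (\<lambda>\<rho>. frac (a \<rho>))" unfolding a_def by (rule cf_frac) (simp add: qf a_def y_def)
  show ?thesis
  proof (cases "qm m = zeroY")
    case False
    have YQ: "qm m \<in> Q" using m(1) unfolding Q_def by blast
    have "(\<Sum>\<rho>\<in>Rays. frac (a \<rho>) * t (Inl \<rho>)) \<le> (\<Sum>\<rho>\<in>Rays. a \<rho> * t (Inl \<rho>))"
    proof (rule sum_mono)
      fix \<rho> assume r: "\<rho> \<in> Rays"
      have "frac (a \<rho>) \<le> a \<rho>" using cf_nonneg[of y \<rho>] unfolding a_def frac_def by simp
      thus "frac (a \<rho>) * t (Inl \<rho>) \<le> a \<rho> * t (Inl \<rho>)" using tRays[OF r] by (intro mult_right_mono) auto
    qed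
    hence "Lam (qm m) \<le> phi d Rays b Fan t m"
      unfolding Lam_def phi_expr coord_cf cfq using False a_def y_def by simp
    moreover have "delta1 \<le> Lam (qm m)" using delta1_le[OF YQ False] .
    ultimately show ?thesis unfolding delta_def by linarith
  next
    case True
    have s0: "snd m = (\<lambda>i. 0)" using True qm_snd[of m] by simp
    have "fst (qm m) = (\<lambda>j. 0)" using True by simp
    hence "(\<lambda>\<rho>. frac (a \<rho>)) = (\<lambda>\<rho>. 0)" using cfq cf_zero by simp
    hence fr: "frac (a \<rho>) = 0" for \<rho> by metis
    have "fst m \<noteq> (\<lambda>j. 0)" using m(2) s0 by (cases m) auto
    then obtain j where j: "fst m j \<noteq> 0" by auto
    have jd: "j < d" using j m(1) unfolding NS_mem by (meson not_less)
    have "y j \<noteq> 0" using j unfolding y_def rig_real_def by simp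
    hence "(\<Sum>\<rho>\<in>Rays. a \<rho> * real_of_int (b \<rho> j)) \<noteq> 0" using cf_sum[OF jd, of y] unfolding a_def by simp
    hence "\<exists>\<rho>\<in>Rays. a \<rho> \<noteq> 0"
    proof (rule contrapos_np)
      assume "\<not> (\<exists>\<rho>\<in>Rays. a \<rho> \<noteq> 0)"
      hence "\<forall>\<rho>\<in>Rays. a \<rho> = 0" by blast
      thus "(\<Sum>\<rho>\<in>Rays. a \<rho> * real_of_int (b \<rho> j)) = 0" by simp
    qed
    then obtain \<rho> where r: "\<rho> \<in> Rays" "a \<rho> \<noteq> 0" by blast
    have "a \<rho> \<in> \<int>" using fr[of \<rho>] by (simp add: frac_eq_0_iff)
    then obtain kk where kk: "a \<rho> = of_int kk" by (elim Ints_cases)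
    have "kk \<ge> 0" using cf_nonneg[of y \<rho>] kk unfolding a_def by simp
    moreover have "kk \<noteq> 0" using r(2) kk by simp
    ultimately have "kk \<ge> 1" by simp
    hence a1: "a \<rho> \<ge> 1" using kk by simp
    have "t (Inl \<rho>) \<le> a \<rho> * t (Inl \<rho>)" using a1 tRays[OF r(1)] by (simp add: mult_le_cancel_right1)
    also have "\<dots> \<le> (\<Sum>\<rho>\<in>Rays. a \<rho> * t (Inl \<rho>))"
      using r(1) finRays by (intro member_le_sum) (auto intro!: mult_nonneg_nonneg cf_nonneg less_imp_le[OF tRays] simp: a_def)
    finally have "t (Inl \<rho>) \<le> phi d Rays b Fan t m" unfolding phi_expr using True a_def y_def by simp
    moreover have "delta \<le> t (Inl \<rho>)" using tau_le[OF r(1)] unfolding delta_def by simp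
    ultimately show ?thesis by linarith
  qed
qed

lemma phi_nonneg: "m \<in> NS \<Longrightarrow> phi d Rays b Fan t m \<ge> 0"
proof (cases "m = zeroN")
  case True thus ?thesis using phi_zero by simp
next
  case False
  assume "m \<in> NS"
  hence "phi d Rays b Fan t m \<ge> delta" using phi_pos False by blast
  thus ?thesis using delta_pos by simp
qed

lemma y_bound:
  assumes j: "j < d"
  shows "\<bar>real_of_int (fst m j)\<bar> \<le> Acst * (\<Sum>\<rho>\<in>Rays. cf (rig_real (fst m)) \<rho>)"
proof -
  define y where "y = rig_real (fst m)"
  have "\<bar>real_of_int (fst m j)\<bar> = \<bar>\<Sum>\<rho>\<in>Rays. cf y \<rho> * real_of_int (b \<rho> j)\<bar>"
    using cf_sum[OF j, of y] unfolding y_def rig_real_def by simp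
  also have "\<dots> \<le> (\<Sum>\<rho>\<in>Rays. \<bar>cf y \<rho> * real_of_int (b \<rho> j)\<bar>)" by (rule sum_abs)
  also have "\<dots> \<le> (\<Sum>\<rho>\<in>Rays. cf y \<rho> * Acst)"
  proof (rule sum_mono)
    fix \<rho> assume r: "\<rho> \<in> Rays"
    have "\<bar>real_of_int (b \<rho> j)\<bar> \<le> Acst" using abs_b_le[OF r j] unfolding Acst_def by linarith
    thus "\<bar>cf y \<rho> * real_of_int (b \<rho> j)\<bar> \<le> cf y \<rho> * Acst"
      using cf_nonneg[of y \<rho>] by (simp add: abs_mult mult_left_mono)
  qed
  also have "\<dots> = Acst * (\<Sum>\<rho>\<in>Rays. cf y \<rho>)" by (simp add: sum_distrib_left mult.commute)
  finally show ?thesis unfolding y_def .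
qed

lemma phi_lower2:
  assumes m: "m \<in> NS"
  shows "phi d Rays b Fan t m \<ge> kappa * (\<Sum>j<d. \<bar>real_of_int (fst m j)\<bar>) - C0"
proof -
  define S where "S = (\<Sum>\<rho>\<in>Rays. cf (rig_real (fst m)) \<rho>)"
  have S0: "S \<ge> 0" unfolding S_def by (intro sum_nonneg cf_nonneg)
  have "(\<Sum>j<d. \<bar>real_of_int (fst m j)\<bar>) \<le> (\<Sum>j<d. Acst * S)" unfolding S_def by (intro sum_mono y_bound) auto
  also have "\<dots> = real d * Acst * S" by simp
  also have "\<dots> \<le> real (d + 1) * Acst * S" using S0 Acst_pos by (intro mult_right_mono) auto
  finally have "kappa * (\<Sum>j<d. \<bar>real_of_int (fst m j)\<bar>) \<le> kappa * (real (d + 1) * Acst * S)"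
    using kappa_pos by (intro mult_left_mono) auto
  also have "\<dots> = (tau / (real (d+1) * Acst) * (real (d+1) * Acst)) * S" unfolding kappa_def by (simp add: mult_ac)
  also have "\<dots> = tau * S" using Acst_pos by simp
  finally show ?thesis using phi_lower[OF m] unfolding S_def by linarith
qed

lemma phi_inf_nonneg: "phi_inf d Rays b Fan t y \<ge> 0"
  unfolding phi_inf_def coord_cf by (intro sum_nonneg mult_nonneg_nonneg cf_nonneg less_imp_le[OF tRays])

end

definition FS :: "'a set \<Rightarrow> 'b set \<Rightarrow> 'b \<Rightarrow> ('a \<Rightarrow> 'b) set" where
  "FS V M z = {f. \<forall>x. (x \<in> V \<longrightarrow> f x \<in> M) \<and> (x \<notin> V \<longrightarrow> f x = z)}"

lemma FS_fin: "finite V \<Longrightarrow> finite M \<Longrightarrow> finite (FS V M z)"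
  unfolding FS_def by (rule finite_set_of_finite_funs)

lemma FS_empty: "FS {} M z = {(\<lambda>x. z)}" unfolding FS_def by auto

lemma FS_insert:
  assumes "v \<notin> V"
  shows "FS (insert v V) M z = (\<lambda>(m, f). f(v := m)) ` (M \<times> FS V M z)"
proof (intro equalityI subsetI)
  fix g assume g: "g \<in> FS (insert v V) M z"
  have "g = (g(v := z))(v := g v)" by simp
  moreover have "g(v := z) \<in> FS V M z" using g assms unfolding FS_def by auto
  moreover have "g v \<in> M" using g unfolding FS_def by auto
  ultimately show "g \<in> (\<lambda>(m, f). f(v := m)) ` (M \<times> FS V M z)"
    by (intro image_eqI[of _ _ "(g v, g(v := z))"]) auto
next
  fix g assume "g \<in> (\<lambda>(m, f). f(v := m)) ` (M \<times> FS V M z)"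
  then obtain m f where "m \<in> M" "f \<in> FS V M z" "g = f(v := m)" by auto
  thus "g \<in> FS (insert v V) M z" unfolding FS_def by auto
qed

lemma FS_inj:
  assumes "v \<notin> V"
  shows "inj_on (\<lambda>(m, f). f(v := m)) (M \<times> FS V M z)"
proof (rule inj_onI, clarify)
  fix m1 f1 m2 f2 assume A: "m1 \<in> M" "f1 \<in> FS V M z" "m2 \<in> M" "f2 \<in> FS V M z" "f1(v := m1) = f2(v := m2)"
  have "m1 = m2" using fun_upd_eqD[OF A(5)] by simp
  moreover have "f1 = f2"
  proof
    fix x show "f1 x = f2 x"
    proof (cases "x = v")
      case True thus ?thesis using A(2,4) assms unfolding FS_def by auto
    next
      case False thus ?thesis using fun_cong[OF A(5), of x] by simp
    qed
  qed
  ultimately show "m1 = m2 \<and> f1 = f2" by simp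
qed

lemma FS_prod_sum:
  fixes w :: "'a \<Rightarrow> 'b \<Rightarrow> real"
  assumes "finite V" "finite M"
  shows "(\<Sum>f\<in>FS V M z. \<Prod>v\<in>V. w v (f v)) = (\<Prod>v\<in>V. \<Sum>m\<in>M. w v m)"
  using assms(1)
proof (induction V rule: finite_induct)
  case empty thus ?case by (simp add: FS_empty)
next
  case (insert v V)
  have "(\<Sum>f\<in>FS (insert v V) M z. \<Prod>u\<in>insert v V. w u (f u))
      = (\<Sum>mf\<in>M \<times> FS V M z. \<Prod>u\<in>insert v V. w u (((\<lambda>(m, f). f(v := m)) mf) u))"
    unfolding FS_insert[OF insert.hyps(2)] by (rule sum.reindex[OF FS_inj[OF insert.hyps(2)], unfolded comp_def])
  also have "\<dots> = (\<Sum>mf\<in>M \<times> FS V M z. w v (fst mf) * (\<Prod>u\<in>V. w u (snd mf u)))"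
  proof (intro sum.cong refl)
    fix mf assume "mf \<in> M \<times> FS V M z"
    obtain m f where mf: "mf = (m, f)" by (cases mf)
    have "(\<Prod>u\<in>V. w u ((f(v := m)) u)) = (\<Prod>u\<in>V. w u (f u))"
      using insert.hyps(2) by (intro prod.cong refl) auto
    thus "(\<Prod>u\<in>insert v V. w u (((\<lambda>(m, f). f(v := m)) mf) u)) = w v (fst mf) * (\<Prod>u\<in>V. w u (snd mf u))"
      using insert.hyps by (simp add: mf)
  qed
  also have "\<dots> = (\<Sum>(m, f)\<in>M \<times> FS V M z. w v m * (\<Prod>u\<in>V. w u (f u)))"
    by (simp add: split_def)
  also have "\<dots> = (\<Sum>m\<in>M. \<Sum>f\<in>FS V M z. w v m * (\<Prod>u\<in>V. w u (f u)))"
    by (rule sum.cartesian_product[symmetric])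
  also have "\<dots> = (\<Sum>m\<in>M. w v m) * (\<Sum>f\<in>FS V M z. \<Prod>u\<in>V. w u (f u))"
    by (rule sum_product[symmetric])
  also have "\<dots> = (\<Prod>u\<in>insert v V. \<Sum>m\<in>M. w u m)" using insert by simp
  finally show ?case .
qed

lemma geo2_sum: "(\<Sum>z\<in>{-int K..int K}. (2::real) powr (- \<bar>real_of_int z\<bar>)) \<le> 3 - 2 * 2 powr (- real K)"
proof (induction K)
  case 0 thus ?case by simp
next
  case (Suc K)
  have set: "{-int (Suc K)..int (Suc K)} = insert (int (Suc K)) (insert (- int (Suc K)) {-int K..int K})" by auto
  have "(\<Sum>z\<in>{-int (Suc K)..int (Suc K)}. (2::real) powr (- \<bar>real_of_int z\<bar>))
      = 2 powr (- real (Suc K)) + (2 powr (- real (Suc K)) + (\<Sum>z\<in>{-int K..int K}. (2::real) powr (- \<bar>real_of_int z\<bar>)))"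
    unfolding set by (subst sum.insert, simp, simp)+ (simp add: algebra_simps)
  also have "\<dots> \<le> 2 powr (- real (Suc K)) + (2 powr (- real (Suc K)) + (3 - 2 * 2 powr (- real K)))"
    using Suc by simp
  also have "2 powr (- real K) = 2 * 2 powr (- real (Suc K))"
  proof -
    have e: "- real K = 1 + (- real (Suc K))" by simp
    have "(2::real) powr (- real K) = 2 powr (1 + (- real (Suc K)))" by (subst e) (rule refl)
    also have "\<dots> = 2 * 2 powr (- real (Suc K))" by (subst powr_add) simp
    finally show ?thesis .
  qed
  finally show ?case by simp
qed

lemma geo2_sum3: "finite Z \<Longrightarrow> (\<Sum>z\<in>Z. (2::real) powr (- \<bar>real_of_int z\<bar>)) \<le> 3"
proof -
  assume Z: "finite Z"
  obtain K where K: "\<forall>z\<in>Z. \<bar>z\<bar> \<le> int K"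
  proof -
    have "\<forall>z\<in>Z. \<bar>z\<bar> \<le> int (nat (Max (insert 0 (abs ` Z))))"
      using Z by (auto intro: Max_ge)
    thus ?thesis using that by blast
  qed
  have "(\<Sum>z\<in>Z. (2::real) powr (- \<bar>real_of_int z\<bar>)) \<le> (\<Sum>z\<in>{-int K..int K}. (2::real) powr (- \<bar>real_of_int z\<bar>))"
  proof (rule sum_mono2)
    show "Z \<subseteq> {-int K..int K}"
    proof
      fix x assume "x \<in> Z"
      hence "\<bar>x\<bar> \<le> int K" using K by blast
      thus "x \<in> {-int K..int K}" by (simp add: abs_le_iff)
    qed
  qed auto
  also have "\<dots> \<le> 3 - 2 * 2 powr (- real K)" by (rule geo2_sum)
  also have "\<dots> \<le> 3" by simp
  finally show ?thesis .
qed

lemma inv_sq_nat: "N \<ge> 1 \<Longrightarrow> (\<Sum>a\<in>{2..N}. 1 / (real a)^2) \<le> 1 - 1 / real N"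
proof (induction N rule: dec_induct)
  case base thus ?case by simp
next
  case (step N)
  have "{2..Suc N} = insert (Suc N) {2..N}" using step by auto
  hence "(\<Sum>a\<in>{2..Suc N}. 1 / (real a)^2) = 1 / (real (Suc N))^2 + (\<Sum>a\<in>{2..N}. 1 / (real a)^2)" by simp
  also have "\<dots> \<le> 1 / (real (Suc N))^2 + (1 - 1 / real N)" using step by simp
  also have "\<dots> \<le> 1 - 1 / real (Suc N)"
  proof -
    have N1: "real N \<ge> 1" using step by simp
    have "1 / (real (Suc N))^2 \<le> 1 / (real N * real (Suc N))"
      using N1 by (intro divide_left_mono) (auto simp: power2_eq_square)
    also have "\<dots> = 1 / real N - 1 / real (Suc N)" using N1 by (simp add: field_simps)
    finally show ?thesis by simp
  qed
  finally show ?case .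
qed

lemma inv_sq_int: "finite A \<Longrightarrow> (\<forall>a\<in>A. a \<ge> (2::int)) \<Longrightarrow> (\<Sum>a\<in>A. 1 / (real_of_int a)^2) \<le> 1"
proof -
  assume A: "finite A" "\<forall>a\<in>A. a \<ge> (2::int)"
  define N where "N = Suc (nat (Max (insert 0 A)))"
  have N1: "N \<ge> 1" unfolding N_def by simp
  have sub: "nat ` A \<subseteq> {2..N}"
  proof
    fix x assume "x \<in> nat ` A"
    then obtain a where a: "a \<in> A" "x = nat a" by blast
    have "a \<le> Max (insert 0 A)" using A(1) a(1) by simp
    thus "x \<in> {2..N}" using a A(2) unfolding N_def by auto
  qed
  have inj: "inj_on nat A"
  proof (rule inj_onI)
    fix x y assume "x \<in> A" "y \<in> A" "nat x = nat y"
    from this(3) have "int (nat x) = int (nat y)" by simp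
    moreover have "int (nat x) = x" "int (nat y) = y" using A(2) \<open>x \<in> A\<close> \<open>y \<in> A\<close> by auto
    ultimately show "x = y" by simp
  qed
  have "(\<Sum>a\<in>A. 1 / (real_of_int a)^2) = (\<Sum>x\<in>nat ` A. 1 / (real x)^2)"
    by (subst sum.reindex[OF inj]) (use A(2) in \<open>auto intro!: sum.cong\<close>)
  also have "\<dots> \<le> (\<Sum>x\<in>{2..N}. 1 / (real x)^2)" by (rule sum_mono2[OF _ sub]) auto
  also have "\<dots> \<le> 1 - 1 / real N" using inv_sq_nat[OF N1] .
  also have "\<dots> \<le> 1" by simp
  finally show ?thesis .
qed

lemma prod_one_plus_le_exp:
  assumes "finite V" "\<And>v. v \<in> V \<Longrightarrow> a v \<ge> (0::real)"
  shows "(\<Prod>v\<in>V. 1 + a v) \<le> exp (\<Sum>v\<in>V. a v)"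
proof -
  have "(\<Prod>v\<in>V. 1 + a v) \<le> (\<Prod>v\<in>V. exp (a v))"
    by (intro prod_mono) (use assms(2) in \<open>auto simp: add_nonneg_nonneg\<close>)
  also have "\<dots> = exp (\<Sum>v\<in>V. a v)" by (simp add: exp_sum[OF assms(1)])
  finally show ?thesis .
qed

lemma prod_ge_one_factor:
  fixes g :: "'a \<Rightarrow> real"
  assumes "finite S" "v \<in> S" "\<And>u. u \<in> S \<Longrightarrow> g u \<ge> 1"
  shows "g v \<le> prod g S"
proof -
  have "prod g S = g v * prod g (S - {v})" using assms(1,2) by (simp add: prod.remove)
  moreover have "prod g (S - {v}) \<ge> 1" using assms(3) by (intro prod_ge_1) auto
  moreover have "g v \<ge> 1" using assms(2,3) by blast
  ultimately have "g v * 1 \<le> g v * prod g (S - {v})" by (intro mult_left_mono) auto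
  thus ?thesis using \<open>prod g S = _\<close> by simp
qed

locale mainloc = nf F + fant d l n Rays b Fan t
  for F :: "complex set" and d l :: nat and n :: "nat \<Rightarrow> nat" and Rays :: "'r set"
    and b :: "'r \<Rightarrow> nat \<Rightarrow> int" and Fan :: "'r set set" and t :: "'r + Yelt \<Rightarrow> real"
begin

abbreviation "places \<equiv> finite_places F"
abbreviation "TP \<equiv> torus_points F d l n"
abbreviation "ph \<equiv> phi d Rays b Fan t"
abbreviation "LF v x \<equiv> log_fin F d l n v x"
definition "q v = real (q_fin F v)"
definition "Sx x = {v \<in> places. LF v x \<noteq> zeroN}"

lemma q_ge2: "v \<in> places \<Longrightarrow> q v \<ge> 2"
proof -
  assume v: "v \<in> places"
  obtain p where p: "prime p" "nat p \<le> q_fin F v" using fp_qfin[OF v] by blast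
  have "p \<ge> 2" using prime_ge_2_int[OF p(1)] .
  hence "2 \<le> nat p" by simp
  thus ?thesis unfolding q_def using p(2) by linarith
qed

lemma logfin_NS: "LF v x \<in> NS"
  unfolding log_fin_def Nset_def using n_pos by (auto intro: pos_mod_sign pos_mod_bound)

lemma TP_parts:
  assumes x: "x \<in> TP"
  shows "\<And>j. j < d \<Longrightarrow> fst x j \<in> F \<and> fst x j \<noteq> 0"
    and "\<And>i. i < l \<Longrightarrow> (SOME u. u \<in> snd x i) \<in> F \<and> (SOME u. u \<in> snd x i) \<noteq> 0"
proof -
  obtain tt U where xe: "x = (tt, U)" by (cases x)
  have P: "(\<forall>j<d. tt j \<in> F - {0}) \<and> (\<forall>i<l. \<exists>u\<in>F - {0}. U i = {u * w ^ n i | w. w \<in> F - {0}})"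
    using x unfolding xe torus_points_def by blast
  show "\<And>j. j < d \<Longrightarrow> fst x j \<in> F \<and> fst x j \<noteq> 0" using P xe by auto
  fix i assume i: "i < l"
  obtain u where u: "u \<in> F - {0}" "U i = {u * w ^ n i | w. w \<in> F - {0}}" using P i by blast
  have ne: "\<exists>z. z \<in> U i" using u F1 by (intro exI[of _ u]) force
  have "(SOME z. z \<in> U i) \<in> U i" using someI_ex[OF ne] .
  then obtain w where w: "w \<in> F - {0}" "(SOME z. z \<in> U i) = u * w ^ n i" using u(2) by blast
  have "u * w ^ n i \<in> F" using Fmult Fpow u(1) w(1) by blast
  moreover have "u * w ^ n i \<noteq> 0" using u(1) w(1) by simp
  ultimately show "(SOME u. u \<in> snd x i) \<in> F \<and> (SOME u. u \<in> snd x i) \<noteq> 0" using w(2) xe by simp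
qed

lemma Sx_finite:
  assumes x: "x \<in> TP"
  shows "finite (Sx x)"
proof -
  have sub: "Sx x \<subseteq> (\<Union>j<d. {v \<in> places. ord_v F v (fst x j) \<noteq> 0}) \<union> (\<Union>i<l. {v \<in> places. ord_v F v (SOME u. u \<in> snd x i) \<noteq> 0})"
  proof
    fix v assume "v \<in> Sx x"
    hence v: "v \<in> places" "LF v x \<noteq> zeroN" unfolding Sx_def by auto
    show "v \<in> (\<Union>j<d. {v \<in> places. ord_v F v (fst x j) \<noteq> 0}) \<union> (\<Union>i<l. {v \<in> places. ord_v F v (SOME u. u \<in> snd x i) \<noteq> 0})"
    proof (rule ccontr)
      assume "\<not> ?thesis"
      hence a: "\<forall>j<d. ord_v F v (fst x j) = 0" "\<forall>i<l. ord_v F v (SOME u. u \<in> snd x i) = 0" using v(1) by auto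
      have "LF v x = zeroN" unfolding log_fin_def using a by (auto intro!: ext)
      thus False using v(2) by simp
    qed
  qed
  have "finite (\<Union>j<d. {v \<in> places. ord_v F v (fst x j) \<noteq> 0})"
    using ord_v_support TP_parts(1)[OF x] by auto
  moreover have "finite (\<Union>i<l. {v \<in> places. ord_v F v (SOME u. u \<in> snd x i) \<noteq> 0})"
    using ord_v_support TP_parts(2)[OF x] by auto
  ultimately show ?thesis using finite_subset[OF sub] by blast
qed

definition "Hfin x = (\<Prod>v\<in>Sx x. q v powr ph (LF v x))"
definition "Hinf x = (\<Prod>v\<in>infinite_places F. exp (real (local_degree v) * phi_inf d Rays b Fan t (log_inf d v x)))"

lemma height_eq: "height F d l n Rays b Fan t x = Hfin x * Hinf x"
  unfolding height_def Hfin_def Hinf_def Sx_def q_def by simp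

lemma Hinf_ge1: "Hinf x \<ge> 1"
  unfolding Hinf_def by (intro prod_ge_1) (simp add: phi_inf_nonneg)

lemma factor_ge1: "v \<in> places \<Longrightarrow> q v powr ph (LF v x) \<ge> 1"
  using q_ge2[of v] phi_nonneg[OF logfin_NS] by (intro ge_one_powr_ge_zero) auto

lemma Hfin_pos: "Hfin x > 0"
  unfolding Hfin_def
proof (rule prod_pos)
  fix v assume "v \<in> Sx x"
  hence "q v \<ge> 2" using q_ge2 unfolding Sx_def by blast
  thus "q v powr ph (LF v x) > 0" by simp
qed

lemma Hfin_le: "Hfin x \<le> height F d l n Rays b Fan t x"
proof -
  have "0 \<le> Hfin x" using Hfin_pos[of x] by simp
  hence "Hfin x * 1 \<le> Hfin x * Hinf x" using Hinf_ge1[of x] by (intro mult_left_mono) auto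
  thus ?thesis unfolding height_eq by simp
qed

lemma factor_le:
  assumes x: "x \<in> TP" and v: "v \<in> Sx x"
  shows "q v powr ph (LF v x) \<le> height F d l n Rays b Fan t x"
proof -
  have "q v powr ph (LF v x) \<le> Hfin x" unfolding Hfin_def
    by (rule prod_ge_one_factor[OF Sx_finite[OF x] v]) (use factor_ge1 in \<open>auto simp: Sx_def\<close>)
  thus ?thesis using Hfin_le[of x] by linarith
qed

end

context mainloc
begin

definition "pv v = (SOME p. prime p \<and> of_int p \<in> v \<and> nat p \<le> q_fin F v)"

lemma pv: "v \<in> places \<Longrightarrow> prime (pv v) \<and> of_int (pv v) \<in> v \<and> nat (pv v) \<le> q_fin F v"
proof -
  assume v: "v \<in> places"
  have "\<exists>p. prime p \<and> of_int p \<in> v \<and> nat p \<le> q_fin F v" using fp_qfin[OF v] by blast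
  from someI_ex[OF this] show ?thesis unfolding pv_def .
qed

lemma pv_le_q: "v \<in> places \<Longrightarrow> real_of_int (pv v) \<le> q v"
proof -
  assume v: "v \<in> places"
  have p: "prime (pv v)" "nat (pv v) \<le> q_fin F v" using pv[OF v] by auto
  have "pv v \<ge> 0" using prime_ge_2_int[OF p(1)] by simp
  hence "real_of_int (pv v) = real (nat (pv v))" by simp
  also have "\<dots> \<le> q v" unfolding q_def using p(2) by simp
  finally show ?thesis .
qed

definition "XB B = B powr (1 / delta)"
definition "VB B = {v \<in> places. q v \<le> XB B}"
definition "LB B = max 0 (log 2 B)"
definition "Kb B = nat \<lceil>(LB B + C0) / kappa\<rceil>"
definition "MB B = {m \<in> NS. ph m \<le> LB B}"
definition "Ibox K = FS {..<d} {-int K..int K} (0::int)"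
definition "TB B = FS (VB B) (MB B) zeroN"
definition "SB B = alpha F d l n ` {x \<in> TP. height F d l n Rays b Fan t x \<le> B}"

lemma VB_fin: "finite (VB B)"
proof -
  define X where "X = \<lfloor>XB B\<rfloor>"
  have sub: "VB B \<subseteq> (\<Union>p\<in>{p. prime p \<and> p \<le> X}. {v \<in> places. of_int p \<in> v})"
  proof
    fix v assume "v \<in> VB B"
    hence v: "v \<in> places" "q v \<le> XB B" unfolding VB_def by auto
    have "real_of_int (pv v) \<le> XB B" using pv_le_q[OF v(1)] v(2) by linarith
    hence "pv v \<le> X" unfolding X_def by (simp add: le_floor_iff)
    thus "v \<in> (\<Union>p\<in>{p. prime p \<and> p \<le> X}. {v \<in> places. of_int p \<in> v})" using pv[OF v(1)] v(1) by blast
  qed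
  have "{p. prime p \<and> p \<le> X} \<subseteq> {0..X}"
  proof
    fix p assume "p \<in> {p. prime p \<and> p \<le> X}"
    hence "prime p" "p \<le> X" by auto
    moreover have "p \<ge> 2" using prime_ge_2_int[OF \<open>prime p\<close>] .
    ultimately show "p \<in> {0..X}" by simp
  qed
  hence "finite {p. prime p \<and> p \<le> X}" using finite_subset by blast
  hence "finite (\<Union>p\<in>{p. prime p \<and> p \<le> X}. {v \<in> places. of_int p \<in> v})"
    using places_above_finite(1) by blast
  thus ?thesis using finite_subset[OF sub] by blast
qed

lemma MB_fst: "m \<in> MB B \<Longrightarrow> fst m \<in> Ibox (Kb B)"
proof -
  assume m: "m \<in> MB B"
  hence mN: "m \<in> NS" and ph: "ph m \<le> LB B" unfolding MB_def by auto
  have "kappa * (\<Sum>j<d. \<bar>real_of_int (fst m j)\<bar>) \<le> LB B + C0" using phi_lower2[OF mN] ph by linarith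
  hence s: "(\<Sum>j<d. \<bar>real_of_int (fst m j)\<bar>) \<le> (LB B + C0) / kappa" using kappa_pos by (simp add: field_simps)
  have "fst m j \<in> {-int (Kb B)..int (Kb B)}" if j: "j < d" for j
  proof -
    have "\<bar>real_of_int (fst m j)\<bar> \<le> (\<Sum>j<d. \<bar>real_of_int (fst m j)\<bar>)" using j by (intro member_le_sum) auto
    also have "\<dots> \<le> (LB B + C0) / kappa" using s .
    also have "\<dots> \<le> real (Kb B)" unfolding Kb_def by linarith
    finally have "\<bar>real_of_int (fst m j)\<bar> \<le> real (Kb B)" .
    hence "\<bar>fst m j\<bar> \<le> int (Kb B)" by linarith
    thus ?thesis by (simp add: abs_le_iff)
  qed
  moreover have "fst m j = 0" if "j \<ge> d" for j using mN that unfolding NS_mem by blast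
  ultimately show ?thesis unfolding Ibox_def FS_def by auto
qed

lemma Ibox_fin: "finite (Ibox K)" unfolding Ibox_def by (rule FS_fin) auto

lemma MB_fin: "finite (MB B)"
proof -
  have "MB B \<subseteq> Ibox (Kb B) \<times> Gbox"
  proof
    fix m assume m: "m \<in> MB B"
    hence "snd m \<in> Gbox" using snd_NS unfolding MB_def by blast
    thus "m \<in> Ibox (Kb B) \<times> Gbox" using MB_fst[OF m] by (simp add: mem_Times_iff)
  qed
  thus ?thesis using Ibox_fin Gbox_fin finite_subset by blast
qed

lemma zeroN_NS: "zeroN \<in> NS" unfolding Nset_def using n_pos by auto

lemma zeroN_MB: "zeroN \<in> MB B" unfolding MB_def LB_def using zeroN_NS phi_zero by simp

lemma alpha_val: "alpha F d l n x v = (if v \<in> Sx x then LF v x else zeroN)"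
  unfolding alpha_def Sx_def by auto

lemma in_Sx_bounds:
  assumes x: "x \<in> TP" "height F d l n Rays b Fan t x \<le> B" and v: "v \<in> Sx x"
  shows "v \<in> VB B" "LF v x \<in> MB B"
proof -
  have vp: "v \<in> places" and ne: "LF v x \<noteq> zeroN" using v unfolding Sx_def by auto
  have f: "q v powr ph (LF v x) \<le> B" using factor_le[OF x(1) v] x(2) by linarith
  have q2: "q v \<ge> 2" using q_ge2[OF vp] .
  have phd: "ph (LF v x) \<ge> delta" using phi_pos[OF logfin_NS ne] .
  have ph0: "ph (LF v x) \<ge> 0" using phi_nonneg[OF logfin_NS] .
  have "q v powr delta \<le> q v powr ph (LF v x)" using phd q2 by (intro powr_mono) auto
  hence qd: "q v powr delta \<le> B" using f by linarith
  have "(q v powr delta) powr (1 / delta) \<le> B powr (1 / delta)"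
    using qd delta_pos by (intro powr_mono2) auto
  moreover have "(q v powr delta) powr (1 / delta) = q v"
    using delta_pos q2 by (simp add: powr_powr)
  ultimately have "q v \<le> XB B" unfolding XB_def by simp
  thus "v \<in> VB B" unfolding VB_def using vp by simp
  have "2 powr ph (LF v x) \<le> q v powr ph (LF v x)" using ph0 q2 by (intro powr_mono2) auto
  hence two: "2 powr ph (LF v x) \<le> B" using f by linarith
  have "0 < (2::real) powr ph (LF v x)" by simp
  hence Bp: "B > 0" using two by linarith
  have "ph (LF v x) \<le> log 2 B" using le_log_iff[of 2 B "ph (LF v x)"] two Bp by simp
  hence "ph (LF v x) \<le> LB B" unfolding LB_def by simp
  thus "LF v x \<in> MB B" unfolding MB_def using logfin_NS by simp
qed

lemma SB_sub: "SB B \<subseteq> TB B"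
proof
  fix f assume "f \<in> SB B"
  then obtain x where x: "x \<in> TP" "height F d l n Rays b Fan t x \<le> B" and fx: "f = alpha F d l n x"
    unfolding SB_def by blast
  have "\<forall>v. (v \<in> VB B \<longrightarrow> f v \<in> MB B) \<and> (v \<notin> VB B \<longrightarrow> f v = zeroN)"
  proof (intro allI conjI impI)
    fix v assume "v \<in> VB B"
    show "f v \<in> MB B"
    proof (cases "v \<in> Sx x")
      case True
      hence "f v = LF v x" using fx alpha_val by simp
      thus ?thesis using in_Sx_bounds(2)[OF x True] by simp
    next
      case False
      hence "f v = zeroN" using fx alpha_val by simp
      thus ?thesis using zeroN_MB by simp
    qed
  next
    fix v assume nv: "v \<notin> VB B"
    have "v \<notin> Sx x"
    proof
      assume "v \<in> Sx x"
      thus False using in_Sx_bounds(1)[OF x] nv by blast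
    qed
    thus "f v = zeroN" using fx alpha_val by simp
  qed
  thus "f \<in> TB B" unfolding TB_def FS_def by blast
qed

lemma TB_fin: "finite (TB B)" unfolding TB_def by (rule FS_fin[OF VB_fin MB_fin])

lemma SB_fin: "finite (SB B)" using finite_subset[OF SB_sub TB_fin] .

end

context mainloc
begin

definition "sig = max (2 / delta) (1 / kappa)"
definition "w v m = (if m = zeroN then 1 else q v powr (- sig * ph m))"
definition "E = 4 * 2 powr (sig * C0) * real (card Gbox) * 3 ^ d"

lemma sig_pos: "sig > 0" unfolding sig_def using delta_pos by (simp add: less_max_iff_disj)
lemma sig_delta: "sig * delta \<ge> 2"
proof -
  have "2 / delta \<le> sig" unfolding sig_def by simp
  hence "2 / delta * delta \<le> sig * delta" using delta_pos by (intro mult_right_mono) auto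
  thus ?thesis using delta_pos by simp
qed
lemma sig_kappa: "sig * kappa \<ge> 1"
proof -
  have "1 / kappa \<le> sig" unfolding sig_def by simp
  hence "1 / kappa * kappa \<le> sig * kappa" using kappa_pos by (intro mult_right_mono) auto
  thus ?thesis using kappa_pos by simp
qed

lemma w_nonneg: "w v m \<ge> 0" unfolding w_def by simp

lemma W_ge:
  assumes x: "x \<in> TP" "height F d l n Rays b Fan t x \<le> B"
  shows "(\<Prod>v\<in>VB B. w v (alpha F d l n x v)) \<ge> B powr (- sig)"
proof -
  have sub: "Sx x \<subseteq> VB B" using in_Sx_bounds(1)[OF x] by blast
  have "(\<Prod>v\<in>VB B. w v (alpha F d l n x v)) = (\<Prod>v\<in>Sx x. w v (alpha F d l n x v))"
    by (rule prod.mono_neutral_right[OF VB_fin sub]) (simp add: alpha_val w_def)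
  also have "\<dots> = (\<Prod>v\<in>Sx x. (q v powr ph (LF v x)) powr (- sig))"
  proof (intro prod.cong refl)
    fix v assume v: "v \<in> Sx x"
    hence "LF v x \<noteq> zeroN" unfolding Sx_def by blast
    hence "w v (alpha F d l n x v) = q v powr (- sig * ph (LF v x))" using v by (simp add: alpha_val w_def)
    also have "\<dots> = (q v powr ph (LF v x)) powr (- sig)" by (simp add: powr_powr mult.commute)
    finally show "w v (alpha F d l n x v) = (q v powr ph (LF v x)) powr (- sig)" .
  qed
  also have "\<dots> = Hfin x powr (- sig)" unfolding Hfin_def by (rule prod_powr_distrib[symmetric])
  also have "\<dots> \<ge> B powr (- sig)"
    using Hfin_pos[of x] Hfin_le[of x] x(2) sig_pos by (intro powr_mono2') auto
  finally show ?thesis .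
qed

lemma card_SB_le:
  assumes B: "B > 0"
  shows "real (card (SB B)) \<le> B powr sig * (\<Prod>v\<in>VB B. \<Sum>m\<in>MB B. w v m)"
proof -
  define W where "W f = (\<Prod>v\<in>VB B. w v (f v))" for f :: "complex set \<Rightarrow> Nelt"
  have W0: "W f \<ge> 0" for f unfolding W_def by (intro prod_nonneg w_nonneg)
  have one: "1 \<le> B powr sig * W f" if "f \<in> SB B" for f
  proof -
    have "f \<in> alpha F d l n ` {x \<in> TP. height F d l n Rays b Fan t x \<le> B}" using that unfolding SB_def .
    then obtain x where fx: "f = alpha F d l n x" and xx: "x \<in> {x \<in> TP. height F d l n Rays b Fan t x \<le> B}"
      by (rule imageE)
    from xx have x: "x \<in> TP" "height F d l n Rays b Fan t x \<le> B" by auto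
    have "B powr (- sig) \<le> W f" unfolding W_def fx using W_ge[OF x] .
    hence "B powr sig * B powr (- sig) \<le> B powr sig * W f" by (intro mult_left_mono) auto
    moreover have "B powr sig * B powr (- sig) = 1" using B by (simp add: powr_add[symmetric])
    ultimately show ?thesis by simp
  qed
  have "real (card (SB B)) = (\<Sum>f\<in>SB B. 1)" by simp
  also have "\<dots> \<le> (\<Sum>f\<in>SB B. B powr sig * W f)" by (rule sum_mono) (rule one)
  also have "\<dots> \<le> (\<Sum>f\<in>TB B. B powr sig * W f)"
    by (rule sum_mono2[OF TB_fin SB_sub]) (simp add: W0)
  also have "\<dots> = B powr sig * (\<Sum>f\<in>TB B. W f)" by (simp add: sum_distrib_left)
  also have "(\<Sum>f\<in>TB B. W f) = (\<Prod>v\<in>VB B. \<Sum>m\<in>MB B. w v m)"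
    unfolding W_def TB_def by (rule FS_prod_sum[OF VB_fin MB_fin])
  finally show ?thesis .
qed

lemma qbound:
  assumes m: "m \<in> NS" "m \<noteq> zeroN" and q2: "qq \<ge> (2::real)"
  shows "qq powr (- sig * ph m) \<le> 4 / qq^2 * 2 powr (- sig * ph m)"
proof -
  define e where "e = sig * ph m"
  have "ph m \<ge> delta" using phi_pos[OF m] .
  hence "sig * delta \<le> e" unfolding e_def using sig_pos by (intro mult_left_mono) auto
  hence e2: "e \<ge> 2" using sig_delta by linarith
  have "qq powr (- e) = qq powr (- 2) * qq powr (- (e - 2))" by (simp add: powr_add[symmetric])
  also have "qq powr (- (e - 2)) \<le> 2 powr (- (e - 2))" using e2 q2 by (intro powr_mono2') auto
  also have "(2::real) powr (- (e - 2)) = 4 * 2 powr (- e)"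
  proof -
    have "(2::real) powr (- (e - 2)) = 2 powr (2 + (- e))" by (simp add: algebra_simps)
    also have "\<dots> = 2 powr 2 * 2 powr (- e)" by (rule powr_add)
    finally show ?thesis by simp
  qed
  also have "qq powr (- 2) = 1 / qq^2"
  proof -
    have "qq powr 2 = qq ^ 2" using powr_realpow[of qq 2] q2 by simp
    thus ?thesis by (simp add: powr_minus_divide)
  qed
  finally have "qq powr (- e) \<le> 1 / qq^2 * (4 * 2 powr (- e))" using q2 by (simp add: mult_left_mono)
  thus ?thesis unfolding e_def by (simp add: mult_ac)
qed

lemma twobound:
  assumes m: "m \<in> NS"
  shows "(2::real) powr (- sig * ph m) \<le> 2 powr (sig * C0) * (\<Prod>j<d. 2 powr (- \<bar>real_of_int (fst m j)\<bar>))"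
proof -
  define Sy where "Sy = (\<Sum>j<d. \<bar>real_of_int (fst m j)\<bar>)"
  have Sy0: "Sy \<ge> 0" unfolding Sy_def by (intro sum_nonneg) auto
  have "sig * (kappa * Sy - C0) \<le> sig * ph m" using phi_lower2[OF m] sig_pos unfolding Sy_def by (intro mult_left_mono) auto
  moreover have "Sy \<le> sig * kappa * Sy" using sig_kappa Sy0 by (simp add: mult_le_cancel_right1)
  ultimately have "- sig * ph m \<le> sig * C0 + (- Sy)" by (simp add: algebra_simps)
  hence "(2::real) powr (- sig * ph m) \<le> 2 powr (sig * C0 + (- Sy))" by (intro powr_mono) auto
  also have "\<dots> = 2 powr (sig * C0) * 2 powr (- Sy)" by (rule powr_add)
  also have "(2::real) powr (- Sy) = (\<Prod>j<d. 2 powr (- \<bar>real_of_int (fst m j)\<bar>))"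
    unfolding Sy_def sum_negf[symmetric] by (rule powr_sum) simp
  finally show ?thesis .
qed

lemma sumbox: "(\<Sum>m\<in>MB B. \<Prod>j<d. (2::real) powr (- \<bar>real_of_int (fst m j)\<bar>)) \<le> real (card Gbox) * 3 ^ d"
proof -
  define g where "g y = (\<Prod>j<d. (2::real) powr (- \<bar>real_of_int (y j)\<bar>))" for y :: "nat \<Rightarrow> int"
  define K where "K = Kb B"
  have g0: "g y \<ge> 0" for y unfolding g_def by (intro prod_nonneg) auto
  have sub: "MB B \<subseteq> Ibox K \<times> Gbox"
  proof
    fix m assume m: "m \<in> MB B"
    hence "snd m \<in> Gbox" using snd_NS unfolding MB_def by blast
    thus "m \<in> Ibox K \<times> Gbox" using MB_fst[OF m] unfolding K_def by (simp add: mem_Times_iff)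
  qed
  have "(\<Sum>m\<in>MB B. g (fst m)) \<le> (\<Sum>m\<in>Ibox K \<times> Gbox. g (fst m))"
    by (rule sum_mono2[OF _ sub]) (use Ibox_fin Gbox_fin g0 in auto)
  also have "\<dots> = (\<Sum>(y, gg)\<in>Ibox K \<times> Gbox. g y)" by (simp add: split_def)
  also have "\<dots> = (\<Sum>y\<in>Ibox K. \<Sum>gg\<in>Gbox. g y)" by (rule sum.cartesian_product[symmetric])
  also have "\<dots> = (\<Sum>y\<in>Ibox K. real (card Gbox) * g y)" by simp
  also have "\<dots> = real (card Gbox) * (\<Sum>y\<in>Ibox K. g y)" by (rule sum_distrib_left[symmetric])
  also have "(\<Sum>y\<in>Ibox K. g y) = (\<Prod>j<d. \<Sum>z\<in>{-int K..int K}. (2::real) powr (- \<bar>real_of_int z\<bar>))"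
    unfolding Ibox_def g_def by (rule FS_prod_sum) auto
  also have "\<dots> \<le> (\<Prod>j<d. (3::real))"
    by (intro prod_mono conjI sum_nonneg geo2_sum3) auto
  also have "\<dots> = 3 ^ d" by simp
  finally have "(\<Sum>m\<in>MB B. g (fst m)) \<le> real (card Gbox) * 3 ^ d"
    by (simp add: mult_left_mono)
  thus ?thesis unfolding g_def .
qed

lemma inner:
  assumes v: "v \<in> places"
  shows "(\<Sum>m\<in>MB B. w v m) \<le> 1 + E / (q v)^2"
proof -
  have q2: "q v \<ge> 2" using q_ge2[OF v] .
  have fin: "finite (MB B)" using MB_fin .
  define hh where "hh m = (\<Prod>j<d. (2::real) powr (- \<bar>real_of_int (fst m j)\<bar>))" for m :: Nelt
  define cc where "cc = 4 / (q v)^2 * 2 powr (sig * C0)"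
  have cc0: "cc \<ge> 0" unfolding cc_def by simp
  have hh0: "hh m \<ge> 0" for m unfolding hh_def by (intro prod_nonneg) auto
  have s1: "(\<Sum>m\<in>MB B - {zeroN}. w v m) \<le> (\<Sum>m\<in>MB B - {zeroN}. cc * hh m)"
  proof (rule sum_mono)
    fix m assume m: "m \<in> MB B - {zeroN}"
    hence mN: "m \<in> NS" "m \<noteq> zeroN" unfolding MB_def by auto
    have "w v m = q v powr (- sig * ph m)" using mN(2) unfolding w_def by simp
    also have "\<dots> \<le> 4 / (q v)^2 * 2 powr (- sig * ph m)" using qbound[OF mN q2] .
    also have "\<dots> \<le> 4 / (q v)^2 * (2 powr (sig * C0) * hh m)"
      unfolding hh_def using twobound[OF mN(1)] by (intro mult_left_mono) auto
    finally show "w v m \<le> cc * hh m" unfolding cc_def by (simp add: mult.assoc)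
  qed
  have s2: "(\<Sum>m\<in>MB B - {zeroN}. cc * hh m) = cc * (\<Sum>m\<in>MB B - {zeroN}. hh m)"
    by (rule sum_distrib_left[symmetric])
  have s3: "(\<Sum>m\<in>MB B - {zeroN}. hh m) \<le> (\<Sum>m\<in>MB B. hh m)"
    by (rule sum_mono2[OF fin]) (auto simp: hh0)
  have s4: "(\<Sum>m\<in>MB B. hh m) \<le> real (card Gbox) * 3 ^ d" unfolding hh_def by (rule sumbox)
  have s5: "cc * (\<Sum>m\<in>MB B - {zeroN}. hh m) \<le> cc * (real (card Gbox) * 3 ^ d)"
    using s3 s4 cc0 by (intro mult_left_mono) auto
  have s6: "cc * (real (card Gbox) * 3 ^ d) = E / (q v)^2"
    unfolding E_def cc_def by (simp add: field_simps)
  have r: "(\<Sum>m\<in>MB B - {zeroN}. w v m) \<le> E / (q v)^2" using s1 s2 s5 s6 by linarith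
  have "(\<Sum>m\<in>MB B. w v m) = w v zeroN + (\<Sum>m\<in>MB B - {zeroN}. w v m)"
    using zeroN_MB fin by (simp add: sum.remove)
  moreover have "w v zeroN = 1" unfolding w_def by simp
  ultimately show ?thesis using r by simp
qed

end

context mainloc
begin

lemma sum_inv_q:
  assumes V: "finite V" "V \<subseteq> places"
  shows "(\<Sum>v\<in>V. 1 / (q v)^2) \<le> real D"
proof -
  have pvp: "prime (pv v)" "real_of_int (pv v) \<le> q v" "pv v \<ge> 2" if "v \<in> V" for v
    using pv[of v] pv_le_q[of v] that V(2) prime_ge_2_int by auto
  have "(\<Sum>v\<in>V. 1 / (q v)^2) \<le> (\<Sum>v\<in>V. 1 / (real_of_int (pv v))^2)"
  proof (rule sum_mono)
    fix v assume v: "v \<in> V"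
    have p2: "real_of_int (pv v) \<ge> 2" using pvp(3)[OF v] by simp
    have "(real_of_int (pv v))^2 \<le> (q v)^2" using pvp(2)[OF v] p2 by (intro power_mono) auto
    moreover have "0 < (q v)^2 * (real_of_int (pv v))^2" using p2 pvp(2)[OF v] by simp
    ultimately show "1 / (q v)^2 \<le> 1 / (real_of_int (pv v))^2" by (intro divide_left_mono) auto
  qed
  also have "\<dots> = (\<Sum>p\<in>pv ` V. \<Sum>v\<in>{x \<in> V. pv x = p}. 1 / (real_of_int (pv v))^2)"
    by (rule sum.image_gen[OF V(1)])
  also have "\<dots> = (\<Sum>p\<in>pv ` V. real (card {x \<in> V. pv x = p}) * (1 / (real_of_int p)^2))"
  proof (intro sum.cong refl)
    fix p assume "p \<in> pv ` V"
    have "(\<Sum>v\<in>{x \<in> V. pv x = p}. 1 / (real_of_int (pv v))^2) = (\<Sum>v\<in>{x \<in> V. pv x = p}. 1 / (real_of_int p)^2)"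
      by (intro sum.cong refl) simp
    thus "(\<Sum>v\<in>{x \<in> V. pv x = p}. 1 / (real_of_int (pv v))^2) = real (card {x \<in> V. pv x = p}) * (1 / (real_of_int p)^2)"
      by simp
  qed
  also have "\<dots> \<le> (\<Sum>p\<in>pv ` V. real D * (1 / (real_of_int p)^2))"
  proof (rule sum_mono)
    fix p assume p: "p \<in> pv ` V"
    then obtain v0 where v0: "v0 \<in> V" "p = pv v0" by blast
    have pp: "prime p" using pvp(1)[OF v0(1)] v0(2) by simp
    have "{x \<in> V. pv x = p} \<subseteq> {P \<in> places. of_int p \<in> P}" using pv V(2) by auto
    hence "card {x \<in> V. pv x = p} \<le> card {P \<in> places. of_int p \<in> P}"
      using places_above_finite(1)[OF pp] by (rule card_mono[rotated])
    also have "\<dots> \<le> D" using places_above_finite(2)[OF pp] .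
    finally have "real (card {x \<in> V. pv x = p}) \<le> real D" by simp
    thus "real (card {x \<in> V. pv x = p}) * (1 / (real_of_int p)^2) \<le> real D * (1 / (real_of_int p)^2)"
      by (intro mult_right_mono) auto
  qed
  also have "\<dots> = real D * (\<Sum>p\<in>pv ` V. 1 / (real_of_int p)^2)" by (rule sum_distrib_left[symmetric])
  also have "\<dots> \<le> real D * 1"
    using inv_sq_int[of "pv ` V"] V(1) pvp(3) by (intro mult_left_mono) auto
  finally show ?thesis by simp
qed

lemma E_nonneg: "E \<ge> 0" unfolding E_def by simp

lemma outer:
  shows "(\<Prod>v\<in>VB B. \<Sum>m\<in>MB B. w v m) \<le> exp (E * real D)"
proof -
  have Vp: "VB B \<subseteq> places" unfolding VB_def by blast
  have "(\<Prod>v\<in>VB B. \<Sum>m\<in>MB B. w v m) \<le> (\<Prod>v\<in>VB B. 1 + E / (q v)^2)"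
    by (rule prod_mono) (use inner Vp in \<open>auto intro!: sum_nonneg w_nonneg\<close>)
  also have "\<dots> \<le> exp (\<Sum>v\<in>VB B. E / (q v)^2)"
    by (rule prod_one_plus_le_exp[OF VB_fin]) (simp add: E_nonneg)
  also have "(\<Sum>v\<in>VB B. E / (q v)^2) = E * (\<Sum>v\<in>VB B. 1 / (q v)^2)"
    by (simp add: sum_distrib_left)
  also have "\<dots> \<le> E * real D" using sum_inv_q[OF VB_fin Vp] E_nonneg by (intro mult_left_mono) auto
  finally show ?thesis by simp
qed

lemma final_bound:
  assumes B: "B > 0"
  shows "finite (SB B)" "real (card (SB B)) \<le> exp (E * real D) * B powr sig"
proof -
  show "finite (SB B)" using SB_fin .
  have "real (card (SB B)) \<le> B powr sig * (\<Prod>v\<in>VB B. \<Sum>m\<in>MB B. w v m)" using card_SB_le[OF B] .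
  also have "\<dots> \<le> B powr sig * exp (E * real D)" using outer by (intro mult_left_mono) auto
  finally show "real (card (SB B)) \<le> exp (E * real D) * B powr sig" by (simp add: mult.commute)
qed

end

lemma powr_le_poly:
  assumes "B > 0" "(s::real) \<ge> 0"
  shows "B powr s \<le> 1 + B ^ nat \<lceil>s\<rceil>"
proof (cases "B \<le> 1")
  case True
  hence "B powr s \<le> 1" using assms by (intro powr_le1) auto
  thus ?thesis by (smt (verit) zero_le_power assms(1))
next
  case False
  hence "B powr s \<le> B powr (real (nat \<lceil>s\<rceil>))" by (intro powr_mono) (use assms in auto)
  also have "\<dots> = B ^ nat \<lceil>s\<rceil>" using assms(1) by (rule powr_realpow)
  finally show ?thesis by simp
qed

theorem mainTheorem5:
  fixes F :: "complex set" and d l :: nat and n :: "nat \<Rightarrow> nat"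
    and Rays :: "'r set" and b :: "'r \<Rightarrow> nat \<Rightarrow> int" and Fan :: "'r set set"
    and t :: "'r + Yelt \<Rightarrow> real"
  assumes "number_field F"
    and "simplicial_stacky_fan d l n Rays b Fan"
    and "t \<in> Lambda_open d l n Rays b Fan"
  shows "\<exists>P :: real poly. \<forall>B > 0.
     finite (alpha F d l n ` {x \<in> torus_points F d l n. height F d l n Rays b Fan t x \<le> B}) \<and>
     real (card (alpha F d l n ` {x \<in> torus_points F d l n. height F d l n Rays b Fan t x \<le> B}))
       \<le> poly P B"
proof -
  interpret M: mainloc F d l n Rays b Fan t
    by (intro mainloc.intro nf.intro fant.intro fan.intro fant_axioms.intro assms)
  define Cst where "Cst = exp (M.E * real M.D)"
  define k where "k = nat \<lceil>M.sig\<rceil>"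
  define P where "P = [:Cst:] + monom Cst k"
  have "\<forall>B > 0.
     finite (alpha F d l n ` {x \<in> torus_points F d l n. height F d l n Rays b Fan t x \<le> B}) \<and>
     real (card (alpha F d l n ` {x \<in> torus_points F d l n. height F d l n Rays b Fan t x \<le> B}))
       \<le> poly P B"
  proof (intro allI impI conjI)
    fix B :: real assume B: "B > 0"
    show "finite (alpha F d l n ` {x \<in> torus_points F d l n. height F d l n Rays b Fan t x \<le> B})"
      using M.final_bound(1)[OF B] unfolding M.SB_def .
    have "real (card (M.SB B)) \<le> Cst * B powr M.sig" using M.final_bound(2)[OF B] unfolding Cst_def .
    also have "\<dots> \<le> Cst * (1 + B ^ k)"
      unfolding k_def using powr_le_poly[OF B less_imp_le[OF M.sig_pos]] by (intro mult_left_mono) (auto simp: Cst_def)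
    also have "\<dots> = poly P B" unfolding P_def by (simp add: poly_monom algebra_simps)
    finally show "real (card (alpha F d l n ` {x \<in> torus_points F d l n. height F d l n Rays b Fan t x \<le> B})) \<le> poly P B"
      unfolding M.SB_def .
  qed
  thus ?thesis by blast
qed

end
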